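(* Let $\mathcal G$ be a finite group whose action on $\mathrm{Her}_{\tilde{\mathcal V}}$ satisfies $g\cdot I_{\tilde{\mathcal V}}=I_{\tilde{\mathcal V}}$ for all $g\in\mathcal G$. Assume $\mathcal S=\mathcal S_G$ and that Problem (P) is $\mathcal G$-symmetric. Assume further that for each $t\in\{1,\dots,T\}$ there is a subgroup $\mathcal H^{(t)}\subseteq\mathcal G$ and an irreducible projective (unitary or anti-unitary) representation $\mathcal H^{(t)}\ni h\mapsto U'_{h,t}$ on $\mathcal V_t$ such that for all $h\in\mathcal H^{(t)}$ and $X\in\mathrm{Her}_{\tilde{\mathcal V}}$, $$\mathrm{Tr}_{\mathcal W_T\otimes\mathcal V_T\otimes\cdots\otimes\mathcal V_{t+1}\otimes\mathcal W_t}(h\cdot X)=(\mathrm{Ad}_{U'_{h,t}}\otimes\mathrm{id}_{\mathcal W_{t-1}\otimes\mathcal V_{t-1}\otimes\cdots\otimes\mathcal W_1\otimes\mathcal V_1})\big(\mathrm{Tr}_{\mathcal W_T\otimes\mathcal V_T\otimes\cdots\otimes\mathcal V_{t+1}\otimes\mathcal W_t}X\big).$$ Then the optimal value of Problem (P) equals the optimal value obtained when $\mathcal S$ is replaced by $\mathcal S_\Psi:=\{I_{\tilde{\mathcal V}}/\prod_{t=1}^TN_{\mathcal V_t}\}$, i.e. $\sup_{\Phi\in\mathsf P}P(\Phi)=\sup\{P(\Phi):\Phi\in\mathcal C,\ \sum_m\Phi_m=I_{\tilde{\mathcal V}}/\prod_{t}N_{\mathcal V_t},\ \eta_j(\Phi)\le0\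 \forall j\}$.
   Context: Standing setup. All Hilbert spaces are finite-dimensional complex. Fix an integer $T\ge1$ and systems $\mathcal V_1,\dots,\mathcal V_T,\mathcal W_1,\dots,\mathcal W_T$; set $\mathcal W_0:=\mathbb C$ and $\tilde{\mathcal V}:=\mathcal W_T\otimes\mathcal V_T\otimes\cdots\otimes\mathcal W_1\otimes\mathcal V_1$. $N_{\mathcal X}$ is the dimension of $\mathcal X$; $\mathrm{Her}_{\mathcal X}$ is the real Hilbert space of Hermitian operators on $\mathcal X$ with inner product $\langle X,Y\rangle=\mathrm{Tr}(XY)$, $\mathrm{Pos}_{\mathcal X}$ the positive semidefinite operators, $I_{\mathcal X}$ the identity, $\mathrm{Tr}_{\mathcal X}$ partial trace; $\overline A$ is closure. $\mathcal I_n:=\{0,\dots,n-1\}$. $\mathcal S_G$ is the set of operators $I_{\mathcal W_T}\otimes\tau_T$ where $\tau_t\in\mathrm{Pos}_{\mathcal V_t\otimes\mathcal W_{t-1}\otimes\mathcal V_{t-1}\otimes\cdots\otimes\mathcal W_1\otimes\mathcal V_1}$ ($t=1,\dots,T$) satisfy $\mathrm{Tr}\,\tau_1=1$ and $\mathrm{Tr}_{\mathcal V_t}\tau_t=I_{\mathcal W_{t-1}}\otimes\tau_{t-1}$ for $2\le t\le T$. Fix $M\ge2$; $\mathcal C_G:=\mathrm{Pos}_{\tilde{\mathcal V}}^M$; $\mathcal T_G:=\{\Phi=\{\Phi_m\}_{m=0}^{M-1}\in\mathcal C_G:\sum_m\Phi_m\in\mathcal S_G\}$. Data: $J\ge0$,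 $c_m,a_{j,m}\in\mathrm{Her}_{\tilde{\mathcal V}}$, $b_j\in\mathbb R$; $\eta_j(\Phi):=\sum_m\langle\Phi_m,a_{j,m}\rangle-b_j$, $P(\Phi):=\sum_m\langle\Phi_m,c_m\rangle$. $\mathcal T$ is a nonempty convex subset of $\mathcal T_G$, $\mathsf P:=\{\Phi\in\mathcal T:\eta_j(\Phi)\le0\ \forall j\}$ (assumed to satisfy $\overline{\mathsf P}=\{\Phi\in\overline{\mathcal T}:\eta_j(\Phi)\le0\ \forall j\}$); $\mathcal C\subseteq\mathcal C_G$ a closed convex cone and $\mathcal S\subseteq\mathcal S_G$ a closed convex set with $\overline{\mathcal T}=\{\Phi\in\mathcal C:\sum_m\Phi_m\in\mathcal S\}$. Problem (P): maximize $P(\Phi)$ over $\Phi\in\mathsf P$ (value $\sup$, $-\infty$ if empty). Symmetry: for a finite group $\mathcal G$, Problem (P) is $\mathcal G$-symmetric if (a) there are group actions $x\mapsto g\cdot x$ (with $(gh)\cdot x=g\cdot(h\cdot x)$, $e\cdot x=x$) of $\mathcal G$ on $\mathcal I_M$, on $\mathcal I_J$ and on $\mathrm{Her}_{\tilde{\mathcal V}}$; (b) each map $x\mapsto g\cdot x$ on $\mathrm{Her}_{\tilde{\mathcal V}}$ is linear with $\langle g\cdot x,g\cdot y\rangle=\langle x,y\rangle$; (c) for all $g,j,m$: $\Phi^{(g)}\in\mathcal T$ for $\Phi\in\mathcal T$, $\Phi^{(g)}\in\mathcal C$ for $\Phi\in\mathcal C$, $g\cdot\varphi\in\mathcal S$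 for $\varphi\in\mathcal S$, $g\cdot a_{j,m}=a_{g\cdot j,g\cdot m}$, $b_j=b_{g\cdot j}$, $g\cdot c_m=c_{g\cdot m}$, where $\Phi^{(g)}:=\{g^{-1}\cdot\Phi_{g\cdot m}\}_m$. Representations: for $U$ a unitary or anti-unitary operator on $\mathcal X$, $\mathrm{Ad}_U(X):=UXU^\dagger$. A map $h\mapsto U_h$ from a group to unitary or anti-unitary operators on $\mathcal X$ is a projective (unitary or anti-unitary) representation if $\mathrm{Ad}_{U_e}=\mathrm{id}$ and $\mathrm{Ad}_{U_h}\circ\mathrm{Ad}_{U_{h'}}=\mathrm{Ad}_{U_{hh'}}$ for all $h,h'$; it is irreducible if the only subspaces of $\mathcal X$ invariant under all $U_h$ are $\{0\}$ and $\mathcal X$. *)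

theory Defs
  imports "Jordan_Normal_Form.Schur_Decomposition" "HOL-Algebra.Group" "HOL-Library.Extended_Real"
begin

text \<open>The tensor product of operators is the Kronecker product with the convention that
 the basis index of the composite of a left factor of dimension n and a right factor of
 dimension m is a*m+b (a the left index, b the right index).  This convention is
 associative, so a composite W_T (x) V_T (x) ... (x) W_1 (x) V_1 is a flat index space.\<close>

definition mtrace :: "complex mat \<Rightarrow> complex" where
  "mtrace A = (\<Sum>i<dim_row A. A $$ (i,i))"

definition herm :: "nat \<Rightarrow> complex mat \<Rightarrow> bool" where
  "herm n A \<longleftrightarrow> A \<in> carrier_mat n n \<and> mat_adjoint A = A"

definition psd :: "nat \<Rightarrow> complex mat \<Rightarrow> bool" where
  "psd n A \<longleftrightarrow> herm n A \<and> (\<forall>v \<in> carrier_vec n. 0 \<le> Re (conjugate v \<bullet> (A *\<^sub>v v)))"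

definition hs_inner :: "complex mat \<Rightarrow> complex mat \<Rightarrow> real" where
  "hs_inner X Y = Re (mtrace (X * Y))"

definition kron :: "complex mat \<Rightarrow> complex mat \<Rightarrow> complex mat" where
  "kron A B = mat (dim_row A * dim_row B) (dim_col A * dim_col B)
     (\<lambda>(i,j). A $$ (i div dim_row B, j div dim_col B) * B $$ (i mod dim_row B, j mod dim_col B))"

definition ptr_left :: "nat \<Rightarrow> nat \<Rightarrow> complex mat \<Rightarrow> complex mat" where
  "ptr_left n m X = mat m m (\<lambda>(i,j). \<Sum>k<n. X $$ (k*m+i, k*m+j))"

definition ptranspose_left :: "nat \<Rightarrow> nat \<Rightarrow> complex mat \<Rightarrow> complex mat" where
  "ptranspose_left n m Y = mat (n*m) (n*m)
     (\<lambda>(i,j). Y $$ ((j div m)*m + i mod m, (i div m)*m + j mod m))"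

text \<open>A unitary or anti-unitary operator U on C^n is encoded as a pair (V, b) with V a unitary
 matrix: if b = False then U = V, if b = True then U = V K with K complex conjugation in the
 computational basis (every anti-unitary operator has this form).\<close>

definition unitary_mat :: "nat \<Rightarrow> complex mat \<Rightarrow> bool" where
  "unitary_mat n V \<longleftrightarrow> V \<in> carrier_mat n n \<and> V * mat_adjoint V = 1\<^sub>m n \<and> mat_adjoint V * V = 1\<^sub>m n"

definition op_apply :: "complex mat \<times> bool \<Rightarrow> complex vec \<Rightarrow> complex vec" where
  "op_apply U v = fst U *\<^sub>v (if snd U then conjugate v else v)"

text \<open>Ad_U(X) = U X U^dagger; for U = V K this is V conj(X) V^dagger\<close>
definition Ad :: "complex mat \<times> bool \<Rightarrow> complex mat \<Rightarrow> complex mat" where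
  "Ad U X = fst U * (if snd U then map_mat cnj X else X) * mat_adjoint (fst U)"

text \<open>(Ad_U (x) id_m) on Hermitian operators of the composite n*m (U acting on the left
 factor of dimension n).  On product operators A (x) B with A, B Hermitian it gives
 Ad_U(A) (x) B, and it is the real-linear extension of this (for anti-unitary U = V K,
 conj(A) = A^T for Hermitian A, hence the partial transpose).\<close>
definition Ad_tensor_id :: "complex mat \<times> bool \<Rightarrow> nat \<Rightarrow> nat \<Rightarrow> complex mat \<Rightarrow> complex mat" where
  "Ad_tensor_id U n m Y =
     kron (fst U) (1\<^sub>m m) * (if snd U then ptranspose_left n m Y else Y) * mat_adjoint (kron (fst U) (1\<^sub>m m))"

definition is_subspace :: "nat \<Rightarrow> complex vec set \<Rightarrow> bool" where
  "is_subspace n S \<longleftrightarrow> S \<subseteq> carrier_vec n \<and> 0\<^sub>v n \<in> S \<and>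
     (\<forall>v\<in>S. \<forall>w\<in>S. v + w \<in> S) \<and> (\<forall>c. \<forall>v\<in>S. c \<cdot>\<^sub>v v \<in> S)"

definition proj_rep :: "('g, 'z) monoid_scheme \<Rightarrow> 'g set \<Rightarrow> nat \<Rightarrow> ('g \<Rightarrow> complex mat \<times> bool) \<Rightarrow> bool" where
  "proj_rep G H n U \<longleftrightarrow>
     (\<forall>h\<in>H. unitary_mat n (fst (U h))) \<and>
     (\<forall>X \<in> carrier_mat n n. Ad (U \<one>\<^bsub>G\<^esub>) X = X) \<and>
     (\<forall>h\<in>H. \<forall>h'\<in>H. \<forall>X \<in> carrier_mat n n. Ad (U h) (Ad (U h') X) = Ad (U (h \<otimes>\<^bsub>G\<^esub> h')) X)"

definition irreducible_rep :: "'g set \<Rightarrow> nat \<Rightarrow> ('g \<Rightarrow> complex mat \<times> bool) \<Rightarrow> bool" where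
  "irreducible_rep H n U \<longleftrightarrow>
     (\<forall>S. is_subspace n S \<and> (\<forall>h\<in>H. \<forall>v\<in>S. op_apply (U h) v \<in> S)
        \<longrightarrow> S = {0\<^sub>v n} \<or> S = carrier_vec n)"

text \<open>dV t = N_{V_t}, dW t = N_{W_t} (t = 1..T).
 Rdim dV dW t = dimension of W_t (x) V_t (x) ... (x) W_1 (x) V_1 (= 1 for t = 0).
 Qdim T dV dW t = dimension of W_T (x) V_T (x) ... (x) W_{t+1} (x) V_{t+1}.\<close>

definition Rdim :: "(nat \<Rightarrow> nat) \<Rightarrow> (nat \<Rightarrow> nat) \<Rightarrow> nat \<Rightarrow> nat" where
  "Rdim dV dW t = (\<Prod>s\<in>{1..t}. dW s * dV s)"

definition Qdim :: "nat \<Rightarrow> (nat \<Rightarrow> nat) \<Rightarrow> (nat \<Rightarrow> nat) \<Rightarrow> nat \<Rightarrow> nat" where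
  "Qdim T dV dW t = (\<Prod>s\<in>{t+1..T}. dW s * dV s)"

text \<open>S_G: I_{W_T} (x) tau_T, where tau_t is an operator on V_t (x) W_{t-1} (x) ... (x) V_1
 (dimension dV t * Rdim (t-1)).\<close>
definition S_G :: "nat \<Rightarrow> (nat \<Rightarrow> nat) \<Rightarrow> (nat \<Rightarrow> nat) \<Rightarrow> complex mat set" where
  "S_G T dV dW = {kron (1\<^sub>m (dW T)) (\<tau> T) | \<tau>.
     (\<forall>t\<in>{1..T}. psd (dV t * Rdim dV dW (t-1)) (\<tau> t)) \<and> mtrace (\<tau> 1) = 1 \<and>
     (\<forall>t\<in>{2..T}. ptr_left (dV t) (Rdim dV dW (t-1)) (\<tau> t) = kron (1\<^sub>m (dW (t-1))) (\<tau> (t-1)))}"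

text \<open>An M-tuple {Phi_m}_{m<M} of D x D operators is a function nat => complex mat, with the
 normalisation Phi m = 0 for m >= M.\<close>

definition tuple_space :: "nat \<Rightarrow> nat \<Rightarrow> (nat \<Rightarrow> complex mat) set" where
  "tuple_space M D = {\<Phi>. (\<forall>m<M. \<Phi> m \<in> carrier_mat D D) \<and> (\<forall>m. M \<le> m \<longrightarrow> \<Phi> m = 0\<^sub>m D D)}"

definition C_G :: "nat \<Rightarrow> nat \<Rightarrow> (nat \<Rightarrow> complex mat) set" where
  "C_G M D = {\<Phi> \<in> tuple_space M D. \<forall>m<M. psd D (\<Phi> m)}"

definition msum :: "nat \<Rightarrow> nat \<Rightarrow> (nat \<Rightarrow> complex mat) \<Rightarrow> complex mat" where
  "msum M D \<Phi> = mat D D (\<lambda>(i,j). \<Sum>m<M. \<Phi> m $$ (i,j))"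

definition T_G :: "nat \<Rightarrow> nat \<Rightarrow> (nat \<Rightarrow> nat) \<Rightarrow> (nat \<Rightarrow> nat) \<Rightarrow> (nat \<Rightarrow> complex mat) set" where
  "T_G M T dV dW = {\<Phi> \<in> C_G M (Rdim dV dW T). msum M (Rdim dV dW T) \<Phi> \<in> S_G T dV dW}"

text \<open>closure of a set of M-tuples (entrywise = norm topology, finite dimensions)\<close>
definition tuple_closure :: "nat \<Rightarrow> nat \<Rightarrow> (nat \<Rightarrow> complex mat) set \<Rightarrow> (nat \<Rightarrow> complex mat) set" where
  "tuple_closure M D A = {\<Phi> \<in> tuple_space M D. \<exists>\<Phi>s. (\<forall>k. \<Phi>s k \<in> A) \<and>
     (\<forall>m<M. \<forall>i<D. \<forall>j<D. (\<lambda>k. \<Phi>s k m $$ (i,j)) \<longlonglongrightarrow> \<Phi> m $$ (i,j))}"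

definition tuple_convex :: "(nat \<Rightarrow> complex mat) set \<Rightarrow> bool" where
  "tuple_convex A \<longleftrightarrow> (\<forall>\<Phi>\<in>A. \<forall>\<Psi>\<in>A. \<forall>u::real. 0 \<le> u \<and> u \<le> 1 \<longrightarrow>
     (\<lambda>m. complex_of_real u \<cdot>\<^sub>m \<Phi> m + complex_of_real (1 - u) \<cdot>\<^sub>m \<Psi> m) \<in> A)"

definition tuple_cone :: "(nat \<Rightarrow> complex mat) set \<Rightarrow> bool" where
  "tuple_cone A \<longleftrightarrow> (\<forall>\<Phi>\<in>A. \<forall>u::real. 0 \<le> u \<longrightarrow> (\<lambda>m. complex_of_real u \<cdot>\<^sub>m \<Phi> m) \<in> A)"

definition eta :: "nat \<Rightarrow> (nat \<Rightarrow> nat \<Rightarrow> complex mat) \<Rightarrow> (nat \<Rightarrow> real) \<Rightarrow> nat \<Rightarrow> (nat \<Rightarrow> complex mat) \<Rightarrow> real" where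
  "eta M a b j \<Phi> = (\<Sum>m<M. hs_inner (\<Phi> m) (a j m)) - b j"

definition Pobj :: "nat \<Rightarrow> (nat \<Rightarrow> complex mat) \<Rightarrow> (nat \<Rightarrow> complex mat) \<Rightarrow> real" where
  "Pobj M c \<Phi> = (\<Sum>m<M. hs_inner (\<Phi> m) (c m))"

definition tuple_act :: "('g, 'z) monoid_scheme \<Rightarrow> nat \<Rightarrow> nat \<Rightarrow> ('g \<Rightarrow> nat \<Rightarrow> nat) \<Rightarrow>
    ('g \<Rightarrow> complex mat \<Rightarrow> complex mat) \<Rightarrow> 'g \<Rightarrow> (nat \<Rightarrow> complex mat) \<Rightarrow> (nat \<Rightarrow> complex mat)" where
  "tuple_act G M D actM actH g \<Phi> =
     (\<lambda>m. if m < M then actH (inv\<^bsub>G\<^esub> g) (\<Phi> (actM g m)) else 0\<^sub>m D D)"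

definition index_action :: "('g, 'z) monoid_scheme \<Rightarrow> nat \<Rightarrow> ('g \<Rightarrow> nat \<Rightarrow> nat) \<Rightarrow> bool" where
  "index_action G n act \<longleftrightarrow>
     (\<forall>g\<in>carrier G. \<forall>x<n. act g x < n) \<and> (\<forall>x<n. act \<one>\<^bsub>G\<^esub> x = x) \<and>
     (\<forall>g\<in>carrier G. \<forall>h\<in>carrier G. \<forall>x<n. act (g \<otimes>\<^bsub>G\<^esub> h) x = act g (act h x))"

definition her_action :: "('g, 'z) monoid_scheme \<Rightarrow> nat \<Rightarrow> ('g \<Rightarrow> complex mat \<Rightarrow> complex mat) \<Rightarrow> bool" where
  "her_action G D act \<longleftrightarrow>
     (\<forall>g\<in>carrier G. \<forall>X. herm D X \<longrightarrow> herm D (act g X)) \<and>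
     (\<forall>X. herm D X \<longrightarrow> act \<one>\<^bsub>G\<^esub> X = X) \<and>
     (\<forall>g\<in>carrier G. \<forall>h\<in>carrier G. \<forall>X. herm D X \<longrightarrow> act (g \<otimes>\<^bsub>G\<^esub> h) X = act g (act h X)) \<and>
     (\<forall>g\<in>carrier G. \<forall>X Y. herm D X \<and> herm D Y \<longrightarrow> act g (X + Y) = act g X + act g Y) \<and>
     (\<forall>g\<in>carrier G. \<forall>X. \<forall>r::real. herm D X \<longrightarrow>
        act g (complex_of_real r \<cdot>\<^sub>m X) = complex_of_real r \<cdot>\<^sub>m act g X) \<and>
     (\<forall>g\<in>carrier G. \<forall>X Y. herm D X \<and> herm D Y \<longrightarrow> hs_inner (act g X) (act g Y) = hs_inner X Y)"

end

theory Submission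
  imports Defs "Jordan_Normal_Form.Spectral_Radius"
begin


lemma sum_split_prod: "(\<Sum>p<(n::nat)*m. f p) = (\<Sum>c<n. \<Sum>k<m. f (c*m+k)::'a::comm_monoid_add)"
proof (induction n)
  case 0 then show ?case by simp
next
  case (Suc n)
  have e: "{..<Suc n*m} = {..<n*m} \<union> {n*m..<n*m+m}" by auto
  have 1: "(\<Sum>p<Suc n*m. f p) = (\<Sum>p<n*m. f p) + (\<Sum>p\<in>{n*m..<n*m+m}. f p)"
    unfolding e by (rule sum.union_disjoint) auto
  have 2: "(\<Sum>p\<in>{n*m..<n*m+m}. f p) = (\<Sum>k<m. f (n*m+k))"
  proof -
    have "(\<Sum>p\<in>{0+n*m..<m+n*m}. f p) = (\<Sum>k\<in>{0..<m}. f (k+n*m))"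
      by (rule sum.shift_bounds_nat_ivl)
    then show ?thesis by (simp add: add.commute lessThan_atLeast0)
  qed
  show ?case unfolding 1 2 Suc sum.lessThan_Suc ..
qed

lemma idx_lt: "k < n \<Longrightarrow> i < (m::nat) \<Longrightarrow> k*m+i < n*m"
proof -
  assume "k < n" "i < m"
  have "k*m+i < (k+1)*m" using \<open>i<m\<close> by simp
  also have "\<dots> \<le> n*m" using \<open>k<n\<close> by (intro mult_le_mono1) simp
  finally show ?thesis .
qed

lemma adj_carrier: "A \<in> carrier_mat n m \<Longrightarrow> mat_adjoint A \<in> carrier_mat m n"
  unfolding mat_adjoint_def by auto

lemma adj_index: "A \<in> carrier_mat n m \<Longrightarrow> i < m \<Longrightarrow> j < n \<Longrightarrow> mat_adjoint A $$ (i,j) = cnj (A $$ (j,i))"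
  unfolding mat_adjoint_def by (auto simp: mat_of_rows_def)

lemma herm_index: "herm n A \<Longrightarrow> i < n \<Longrightarrow> j < n \<Longrightarrow> A $$ (i,j) = cnj (A $$ (j,i))"
  unfolding herm_def by (metis adj_index)

lemma hermI: assumes "A \<in> carrier_mat n n" "\<And>i j. i < n \<Longrightarrow> j < n \<Longrightarrow> A $$ (i,j) = cnj (A $$ (j,i))"
  shows "herm n A"
proof -
  have "mat_adjoint A = A"
  proof (rule eq_matI)
    fix i j assume "i < dim_row A" "j < dim_col A"
    then have "i < n" "j < n" using assms(1) by auto
    then show "mat_adjoint A $$ (i,j) = A $$ (i,j)" using assms(2)[of j i] adj_index[OF assms(1)] by simp
  qed (use adj_carrier[OF assms(1)] assms(1) in auto)
  then show ?thesis unfolding herm_def using assms(1) by simp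
qed

lemma ptr_carrier[simp]: "ptr_left n m X \<in> carrier_mat m m"
  unfolding ptr_left_def by auto

lemma dim_ptr[simp]: "dim_row (ptr_left n m X) = m" "dim_col (ptr_left n m X) = m"
  unfolding ptr_left_def by auto

lemma ptr_index: "i < m \<Longrightarrow> j < m \<Longrightarrow> ptr_left n m X $$ (i,j) = (\<Sum>k<n. X $$ (k*m+i, k*m+j))"
  unfolding ptr_left_def by auto

lemma kron_carrier: "A \<in> carrier_mat a a \<Longrightarrow> B \<in> carrier_mat b b \<Longrightarrow> kron A B \<in> carrier_mat (a*b) (a*b)"
  unfolding kron_def by auto

lemma kron_index: "A \<in> carrier_mat a a \<Longrightarrow> B \<in> carrier_mat b b \<Longrightarrow> i < a*b \<Longrightarrow> j < a*b \<Longrightarrow>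
  kron A B $$ (i,j) = A $$ (i div b, j div b) * B $$ (i mod b, j mod b)"
  unfolding kron_def by auto

lemma mtrace_carrier: "A \<in> carrier_mat n n \<Longrightarrow> mtrace A = (\<Sum>i<n. A $$ (i,i))"
  unfolding mtrace_def by auto

lemma ptr_kron: assumes A: "A \<in> carrier_mat n n" and B: "B \<in> carrier_mat m m"
  shows "ptr_left n m (kron A B) = mtrace A \<cdot>\<^sub>m B"
proof (rule eq_matI)
  fix i j assume i: "i < dim_row (mtrace A \<cdot>\<^sub>m B)" and j: "j < dim_col (mtrace A \<cdot>\<^sub>m B)"
  hence i: "i < m" and j: "j < m" using B by auto
  have "ptr_left n m (kron A B) $$ (i,j) = (\<Sum>k<n. kron A B $$ (k*m+i, k*m+j))" by (rule ptr_index[OF i j])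
  also have "\<dots> = (\<Sum>k<n. A $$ (k,k) * B $$ (i,j))"
  proof (rule sum.cong[OF refl])
    fix k assume k: "k \<in> {..<n}"
    have lt: "k*m+i < n*m" "k*m+j < n*m" using k i j idx_lt by auto
    then show "kron A B $$ (k*m+i, k*m+j) = A $$ (k,k) * B $$ (i,j)"
      using kron_index[OF A B] i j by simp
  qed
  also have "\<dots> = mtrace A * B $$ (i,j)" using A by (simp add: mtrace_carrier sum_distrib_right)
  finally show "ptr_left n m (kron A B) $$ (i,j) = (mtrace A \<cdot>\<^sub>m B) $$ (i,j)" using i j B by simp
qed (use B in \<open>auto simp: ptr_left_def\<close>)



lemma ptr_ptr: "ptr_left (n1*n2) m X = ptr_left n2 m (ptr_left n1 (n2*m) X)"
proof (rule eq_matI)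
  fix i j assume "i < dim_row (ptr_left n2 m (ptr_left n1 (n2 * m) X))" "j < dim_col (ptr_left n2 m (ptr_left n1 (n2 * m) X))"
  then have i: "i < m" and j: "j < m" by auto
  have "ptr_left (n1*n2) m X $$ (i,j) = (\<Sum>k<n1*n2. X $$ (k*m+i, k*m+j))" by (rule ptr_index[OF i j])
  also have "\<dots> = (\<Sum>c<n1. \<Sum>d<n2. X $$ ((c*n2+d)*m+i, (c*n2+d)*m+j))" by (rule sum_split_prod)
  also have "\<dots> = (\<Sum>d<n2. \<Sum>c<n1. X $$ (c*(n2*m)+(d*m+i), c*(n2*m)+(d*m+j)))"
    by (subst sum.swap) (simp add: algebra_simps)
  also have "\<dots> = (\<Sum>d<n2. ptr_left n1 (n2*m) X $$ (d*m+i, d*m+j))"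
    using idx_lt i j by (intro sum.cong refl, subst ptr_index) auto
  also have "\<dots> = ptr_left n2 m (ptr_left n1 (n2*m) X) $$ (i,j)" by (rule ptr_index[OF i j, symmetric])
  finally show "ptr_left (n1*n2) m X $$ (i,j) = ptr_left n2 m (ptr_left n1 (n2*m) X) $$ (i,j)" .
qed auto

lemma ptr_smult: "X \<in> carrier_mat (n*m) (n*m) \<Longrightarrow> ptr_left n m (c \<cdot>\<^sub>m X) = c \<cdot>\<^sub>m ptr_left n m X"
proof (rule eq_matI)
  fix i j assume X: "X \<in> carrier_mat (n*m) (n*m)" and "i < dim_row (c \<cdot>\<^sub>m ptr_left n m X)" "j < dim_col (c \<cdot>\<^sub>m ptr_left n m X)"
  then have i: "i < m" and j: "j < m" by auto
  show "ptr_left n m (c \<cdot>\<^sub>m X) $$ (i, j) = (c \<cdot>\<^sub>m ptr_left n m X) $$ (i, j)"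
    using i j X idx_lt by (simp add: ptr_index sum_distrib_left)
qed auto

lemma mtrace_one[simp]: "mtrace (1\<^sub>m n :: complex mat) = of_nat n"
  unfolding mtrace_def by simp

lemma ptr_kron_id: "B \<in> carrier_mat m m \<Longrightarrow> ptr_left n m (kron (1\<^sub>m n) B) = of_nat n \<cdot>\<^sub>m B"
  using ptr_kron[of "1\<^sub>m n" n B m] by simp

lemma kron_id_smult: "kron (1\<^sub>m a) (c \<cdot>\<^sub>m 1\<^sub>m b :: complex mat) = c \<cdot>\<^sub>m 1\<^sub>m (a*b)"
proof (rule eq_matI)
  fix i j assume "i < dim_row (c \<cdot>\<^sub>m 1\<^sub>m (a * b))" "j < dim_col (c \<cdot>\<^sub>m 1\<^sub>m (a * b))"
  then have i: "i < a*b" and j: "j < a*b" by auto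
  have bpos: "b > 0" using i by (cases b) auto
  have "(i div b = j div b \<and> i mod b = j mod b) = (i = j)"
    by (metis div_mult_mod_eq)
  moreover have "i div b < a" "j div b < a" using i j
    by (simp_all add: less_mult_imp_div_less mult.commute)
  ultimately show "kron (1\<^sub>m a) (c \<cdot>\<^sub>m 1\<^sub>m b) $$ (i, j) = (c \<cdot>\<^sub>m 1\<^sub>m (a * b)) $$ (i, j)"
    using i j bpos by (auto simp: kron_index[of _ a _ b])
qed (auto simp: kron_def)

lemma idx_decomp: "p < n*m \<Longrightarrow> p = (p div m)*m + p mod m \<and> p div m < n \<and> p mod m < (m::nat)"
  by (metis div_mult_mod_eq less_mult_imp_div_less mod_less_divisor mult.commute mult_zero_right nat_neq_iff not_less0)

lemma Rdim_0[simp]: "Rdim dV dW 0 = 1" unfolding Rdim_def by simp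
lemma Rdim_Suc: "Rdim dV dW (Suc t) = dW (Suc t) * dV (Suc t) * Rdim dV dW t"
  unfolding Rdim_def by (simp add: prod.nat_ivl_Suc' mult.commute)
lemma Qdim_T[simp]: "Qdim T dV dW T = 1" unfolding Qdim_def by simp
lemma Qdim_step: "t < T \<Longrightarrow> Qdim T dV dW t = Qdim T dV dW (Suc t) * (dW (Suc t) * dV (Suc t))"
  unfolding Qdim_def by (simp add: prod.atLeast_Suc_atMost mult.commute)
lemma Rdim_Qdim: "t \<le> T \<Longrightarrow> Rdim dV dW T = Qdim T dV dW t * Rdim dV dW t"
proof (induction "T - t" arbitrary: t)
  case 0 then show ?case by simp
next
  case (Suc k)
  then have "t < T" by simp
  from Suc(1)[of "Suc t"] Suc(2) \<open>t<T\<close> have "Rdim dV dW T = Qdim T dV dW (Suc t) * Rdim dV dW (Suc t)" by simp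
  then show ?case using Qdim_step[OF \<open>t<T\<close>, of dV dW] Rdim_Suc[of dV dW t] by (simp add: ac_simps)
qed



lemma mv_index: "A \<in> carrier_mat n m \<Longrightarrow> v \<in> carrier_vec m \<Longrightarrow> i < n \<Longrightarrow>
   (A *\<^sub>v v) $ i = (\<Sum>j<m. A $$ (i,j) * v $ j)"
  by (auto simp: scalar_prod_def lessThan_atLeast0)

lemma conj_mv: assumes A: "A \<in> carrier_mat n n" and w: "w \<in> carrier_vec n"
  shows "map_mat cnj A *\<^sub>v conjugate w = conjugate (A *\<^sub>v w)"
proof (rule eq_vecI)
  fix i assume "i < dim_vec (conjugate (A *\<^sub>v w))"
  then have i: "i < n" using A by auto
  have c1: "map_mat cnj A \<in> carrier_mat n n" using A by auto
  show "(map_mat cnj A *\<^sub>v conjugate w) $ i = conjugate (A *\<^sub>v w) $ i"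
    using i A w mv_index[OF c1, of "conjugate w" i] mv_index[OF A w i]
    by (simp add: cnj_sum)
qed (use A w in auto)

lemma herm_eigen_real: assumes E: "herm n E" and v: "v \<in> carrier_vec n" and nz: "v \<noteq> 0\<^sub>v n"
  and ev: "E *\<^sub>v v = l \<cdot>\<^sub>v v"
  shows "cnj l = l"
proof -
  have Ec: "E \<in> carrier_mat n n" using E unfolding herm_def by auto
  define q where "q = (\<Sum>i<n. \<Sum>j<n. cnj (v$i) * E $$ (i,j) * v $ j)"
  define r where "r = (\<Sum>i<n. cnj (v$i) * v$i)"
  have "q = (\<Sum>i<n. cnj (v$i) * (E *\<^sub>v v) $ i)"
    unfolding q_def using mv_index[OF Ec v] by (simp add: sum_distrib_left mult.assoc)
  also have "\<dots> = l * r" unfolding r_def using ev v by (simp add: sum_distrib_left ac_simps)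
  finally have q1: "q = l * r" .
  have "cnj q = (\<Sum>i<n. \<Sum>j<n. v$i * cnj (E $$ (i,j)) * cnj (v $ j))"
    unfolding q_def by (simp add: cnj_sum)
  also have "\<dots> = (\<Sum>i<n. \<Sum>j<n. v$i * E $$ (j,i) * cnj (v $ j))"
    using herm_index[OF E] by (intro sum.cong refl) (metis complex_cnj_cnj lessThan_iff)
  also have "\<dots> = q" unfolding q_def by (subst sum.swap) (simp add: ac_simps)
  finally have q2: "cnj q = q" .
  have rr: "r = of_real (\<Sum>i<n. (cmod (v$i))^2)"
    unfolding r_def of_real_sum by (intro sum.cong refl) (metis complex_norm_square mult.commute)
  obtain i where i: "i < n" "v $ i \<noteq> 0" using nz v by (metis eq_vecI carrier_vecD index_zero_vec(1,2))
  have sp: "(\<Sum>i<n. (cmod (v$i))^2) > 0"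
    by (rule sum_pos2[of _ i]) (use i in auto)
  have r0: "r \<noteq> 0" unfolding rr using sp by (metis of_real_eq_0_iff less_irrefl)
  have rc: "cnj r = r" by (simp only: rr complex_cnj_complex_of_real)
  from q1 q2 have "cnj l * r = l * r" using rc by (metis complex_cnj_mult)
  then show ?thesis using r0 by simp
qed

lemma unitary_carrier: "unitary_mat n V \<Longrightarrow> V \<in> carrier_mat n n"
  unfolding unitary_mat_def by auto

lemma Ad_comm: assumes V: "unitary_mat n V" and X: "X \<in> carrier_mat n n" and E: "E \<in> carrier_mat n n"
  and eq: "V * X * mat_adjoint V = E"
  shows "E * V = V * X"
proof -
  have Vc: "V \<in> carrier_mat n n" using V unitary_carrier by auto
  have Ac: "mat_adjoint V \<in> carrier_mat n n" using adj_carrier[OF Vc] .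
  have "E * V = V * X * mat_adjoint V * V" using eq by simp
  also have "\<dots> = V * X * (mat_adjoint V * V)" using Vc Ac X by (simp add: assoc_mult_mat[of _ n n _ n _ n])
  also have "\<dots> = V * X" using V Vc X unfolding unitary_mat_def by simp
  finally show ?thesis .
qed

lemma schur_herm:
  assumes n: "n > 0" and E: "herm n E"
   and Urep: "\<forall>h\<in>H. unitary_mat n (fst (U h))"
   and inv: "\<forall>h\<in>H. Ad (U h) E = E"
   and irr: "irreducible_rep H n U"
  shows "\<exists>l. E = l \<cdot>\<^sub>m 1\<^sub>m n"
proof -
  have Ec: "E \<in> carrier_mat n n" using E unfolding herm_def by auto
  from spectrum_non_empty[OF Ec n] obtain l where "eigenvalue E l" unfolding spectrum_def by auto
  then obtain v where v: "v \<in> carrier_vec n" "v \<noteq> 0\<^sub>v n" "E *\<^sub>v v = l \<cdot>\<^sub>v v"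
    unfolding eigenvalue_def eigenvector_def using Ec by auto
  have lr: "cnj l = l" by (rule herm_eigen_real[OF E v])
  define S where "S = {w \<in> carrier_vec n. E *\<^sub>v w = l \<cdot>\<^sub>v w}"
  have sub: "is_subspace n S"
    unfolding is_subspace_def S_def
  proof (intro conjI ballI allI)
    show "{w \<in> carrier_vec n. E *\<^sub>v w = l \<cdot>\<^sub>v w} \<subseteq> carrier_vec n" by auto
    show "0\<^sub>v n \<in> {w \<in> carrier_vec n. E *\<^sub>v w = l \<cdot>\<^sub>v w}" using Ec by auto
  next
    fix x y assume x: "x \<in> {w \<in> carrier_vec n. E *\<^sub>v w = l \<cdot>\<^sub>v w}" and y: "y \<in> {w \<in> carrier_vec n. E *\<^sub>v w = l \<cdot>\<^sub>v w}"
    then show "x + y \<in> {w \<in> carrier_vec n. E *\<^sub>v w = l \<cdot>\<^sub>v w}"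
      using Ec by (auto simp: mult_add_distrib_mat_vec[OF Ec] smult_add_distrib_vec[of _ n])
  next
    fix c x assume x: "x \<in> {w \<in> carrier_vec n. E *\<^sub>v w = l \<cdot>\<^sub>v w}"
    then show "c \<cdot>\<^sub>v x \<in> {w \<in> carrier_vec n. E *\<^sub>v w = l \<cdot>\<^sub>v w}"
      using Ec by (auto simp: mult_mat_vec[OF Ec] smult_smult_assoc mult.commute)
  qed
  have invS: "\<forall>h\<in>H. \<forall>w\<in>S. op_apply (U h) w \<in> S"
  proof (intro ballI)
    fix h w assume h: "h \<in> H" and w: "w \<in> S"
    define V where "V = fst (U h)"
    define X where "X = (if snd (U h) then map_mat cnj E else E)"
    define x where "x = (if snd (U h) then conjugate w else w)"
    have wc: "w \<in> carrier_vec n" and ew: "E *\<^sub>v w = l \<cdot>\<^sub>v w" using w S_def by auto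
    have Vu: "unitary_mat n V" using Urep h V_def by auto
    have Vc: "V \<in> carrier_mat n n" using unitary_carrier[OF Vu] .
    have Xc: "X \<in> carrier_mat n n" using Ec X_def by auto
    have xc: "x \<in> carrier_vec n" using wc x_def by auto
    have "V * X * mat_adjoint V = E" using inv h unfolding Ad_def V_def X_def by auto
    then have EV: "E * V = V * X" using Ad_comm[OF Vu Xc Ec] by auto
    have Xx: "X *\<^sub>v x = l \<cdot>\<^sub>v x"
    proof (cases "snd (U h)")
      case True
      then have "X *\<^sub>v x = conjugate (E *\<^sub>v w)" unfolding X_def x_def using conj_mv[OF Ec wc] by simp
      also have "\<dots> = l \<cdot>\<^sub>v x" unfolding ew x_def using True lr by (simp add: conjugate_smult_vec)
      finally show ?thesis .
    next
      case False then show ?thesis unfolding X_def x_def using ew by simp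
    qed
    have oa: "op_apply (U h) w = V *\<^sub>v x" unfolding op_apply_def V_def x_def by simp
    have "E *\<^sub>v (V *\<^sub>v x) = (E * V) *\<^sub>v x" using Ec Vc xc by simp
    also have "\<dots> = V *\<^sub>v (X *\<^sub>v x)" unfolding EV using Vc Xc xc by simp
    also have "\<dots> = l \<cdot>\<^sub>v (V *\<^sub>v x)" unfolding Xx using mult_mat_vec[OF Vc xc] .
    finally show "op_apply (U h) w \<in> S" unfolding oa S_def using Vc xc by auto
  qed
  have "S = {0\<^sub>v n} \<or> S = carrier_vec n" using irr sub invS unfolding irreducible_rep_def by blast
  moreover have "v \<in> S" using v S_def by auto
  ultimately have Sall: "S = carrier_vec n" using v by auto
  have "E = l \<cdot>\<^sub>m 1\<^sub>m n"
  proof (rule eq_matI)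
    fix i j assume "i < dim_row (l \<cdot>\<^sub>m 1\<^sub>m n)" "j < dim_col (l \<cdot>\<^sub>m 1\<^sub>m n)"
    then have i: "i < n" and j: "j < n" by auto
    have "unit_vec n j \<in> S" using Sall by auto
    then have "E *\<^sub>v unit_vec n j = l \<cdot>\<^sub>v unit_vec n j" unfolding S_def by auto
    then have "(E *\<^sub>v unit_vec n j) $ i = l * (if i = j then 1 else 0)" using i j by auto
    moreover have "(E *\<^sub>v unit_vec n j) $ i = E $$ (i,j)"
      using mv_index[OF Ec unit_vec_carrier i, of j] j by (simp add: if_distrib sum.delta cong: if_cong)
    ultimately show "E $$ (i,j) = (l \<cdot>\<^sub>m 1\<^sub>m n) $$ (i,j)" using i j by auto
  qed (use Ec in auto)
  then show ?thesis by blast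
qed



lemma mm_index: assumes "A \<in> carrier_mat n k" "B \<in> carrier_mat k m" "i < n" "j < m"
  shows "(A * B) $$ (i,j) = (\<Sum>l<k. A $$ (i,l) * B $$ (l,j))"
  using assms by (simp add: scalar_prod_def lessThan_atLeast0)

lemma conj3_index: assumes V: "V \<in> carrier_mat n n" and X: "X \<in> carrier_mat n n" and a: "a < n" and b: "b < n"
  shows "(V * X * mat_adjoint V) $$ (a,b) = (\<Sum>c<n. \<Sum>d<n. V $$ (a,c) * X $$ (c,d) * cnj (V $$ (b,d)))"
proof -
  have Ac: "mat_adjoint V \<in> carrier_mat n n" by (rule adj_carrier[OF V])
  have VX: "V * X \<in> carrier_mat n n" using V X by auto
  have "(V * X * mat_adjoint V) $$ (a,b) = (\<Sum>d<n. (V * X) $$ (a,d) * mat_adjoint V $$ (d,b))"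
    by (rule mm_index[OF VX Ac a b])
  also have "\<dots> = (\<Sum>d<n. (\<Sum>c<n. V $$ (a,c) * X $$ (c,d)) * cnj (V $$ (b,d)))"
    using V X a b adj_index[OF V] mm_index[OF V X a] by (intro sum.cong refl) simp
  also have "\<dots> = (\<Sum>c<n. \<Sum>d<n. V $$ (a,c) * X $$ (c,d) * cnj (V $$ (b,d)))"
    by (simp add: sum_distrib_right) (rule sum.swap)
  finally show ?thesis .
qed

lemma kronI_index: assumes V: "V \<in> carrier_mat n n" and a: "a < n" and c: "c < n" and p: "p < m" and k: "k < m"
  shows "kron V (1\<^sub>m m) $$ (a*m+p, c*m+k) = (if p = k then V $$ (a,c) else 0)"
  using kron_index[OF V one_carrier_mat[of m], of "a*m+p" "c*m+k"] idx_lt[OF a p] idx_lt[OF c k] p k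
  by auto

lemma delta_sum4: "(p::nat) < m \<Longrightarrow> q < m \<Longrightarrow> (\<Sum>c<n. \<Sum>k<m. \<Sum>d<n. \<Sum>l<m. (if p = k then (V::complex mat) $$ (a,c) else 0) * Z $$ (c*m+k,d*m+l) * cnj (if q = l then V $$ (b,d) else 0))
  = (\<Sum>c<n. \<Sum>d<n. V $$ (a,c) * Z $$ (c*m+p, d*m+q) * cnj (V $$ (b,d)))"
proof -
  assume p: "p < m" and q: "q < m"
  have "\<And>c. (\<Sum>k<m. \<Sum>d<n. \<Sum>l<m. (if p = k then (V::complex mat) $$ (a,c) else 0) * Z $$ (c*m+k,d*m+l) * cnj (if q = l then V $$ (b,d) else 0))
     = (\<Sum>d<n. \<Sum>l<m. V $$ (a,c) * Z $$ (c*m+p,d*m+l) * cnj (if q = l then V $$ (b,d) else 0))"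
    using p by (subst sum.remove[of _ p]) auto
  moreover have "\<And>c d. (\<Sum>l<m. V $$ (a,c) * Z $$ (c*m+p,d*m+l) * cnj (if q = l then V $$ (b,d) else 0)) = V $$ (a,c) * Z $$ (c*m+p, d*m+q) * cnj (V $$ (b,d))"
    using q by (subst sum.remove[of _ q]) auto
  ultimately show ?thesis by simp
qed

lemma block_conj: assumes V: "V \<in> carrier_mat n n" and Z: "Z \<in> carrier_mat (n*m) (n*m)"
  and a: "a < n" and b: "b < n" and p: "p < m" and q: "q < m"
  shows "(kron V (1\<^sub>m m) * Z * mat_adjoint (kron V (1\<^sub>m m))) $$ (a*m+p, b*m+q) =
         (\<Sum>c<n. \<Sum>d<n. V $$ (a,c) * Z $$ (c*m+p, d*m+q) * cnj (V $$ (b,d)))"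
proof -
  have W: "kron V (1\<^sub>m m) \<in> carrier_mat (n*m) (n*m)" using kron_carrier[OF V one_carrier_mat] .
  have "(kron V (1\<^sub>m m) * Z * mat_adjoint (kron V (1\<^sub>m m))) $$ (a*m+p, b*m+q) =
     (\<Sum>s<n*m. \<Sum>r<n*m. kron V (1\<^sub>m m) $$ (a*m+p,s) * Z $$ (s,r) * cnj (kron V (1\<^sub>m m) $$ (b*m+q,r)))"
    by (rule conj3_index[OF W Z idx_lt[OF a p] idx_lt[OF b q]])
  also have "\<dots> = (\<Sum>c<n. \<Sum>k<m. \<Sum>d<n. \<Sum>l<m. kron V (1\<^sub>m m) $$ (a*m+p,c*m+k) * Z $$ (c*m+k,d*m+l) * cnj (kron V (1\<^sub>m m) $$ (b*m+q,d*m+l)))"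
    by (simp add: sum_split_prod)
  also have "\<dots> = (\<Sum>c<n. \<Sum>k<m. \<Sum>d<n. \<Sum>l<m. (if p = k then V $$ (a,c) else 0) * Z $$ (c*m+k,d*m+l) * cnj (if q = l then V $$ (b,d) else 0))"
    using kronI_index[OF V] a b p q by (intro sum.cong refl) simp
  also have "\<dots> = (\<Sum>c<n. \<Sum>d<n. V $$ (a,c) * Z $$ (c*m+p, d*m+q) * cnj (V $$ (b,d)))"
    using p q by (rule delta_sum4)
  finally show ?thesis .
qed



lemma ptrans_index: assumes "p < m" "q < m" "c < n" "d < n"
  shows "ptranspose_left n m Y $$ (c*m+p, d*m+q) = Y $$ (d*m+p, c*m+q)"
  using assms idx_lt[of c n p m] idx_lt[of d n q m] unfolding ptranspose_left_def by simp

lemma Ad_eq_from: assumes V: "V \<in> carrier_mat n n" and X: "X \<in> carrier_mat n n" and E: "E \<in> carrier_mat n n"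
  and h: "\<forall>a<n. \<forall>b<n. E $$ (a,b) = (\<Sum>c<n. \<Sum>d<n. V $$ (a,c) * X $$ (c,d) * cnj (V $$ (b,d)))"
  shows "V * X * mat_adjoint V = E"
proof (rule eq_matI)
  fix a b assume "a < dim_row E" "b < dim_col E"
  then have a: "a < n" and b: "b < n" using E by auto
  show "(V * X * mat_adjoint V) $$ (a,b) = E $$ (a,b)" using conj3_index[OF V X a b] h a b by simp
qed (use V E adj_carrier[OF V] in auto)

lemma block_schur:
  assumes n: "n > 0" and Y: "herm (n*m) Y"
   and Urep: "\<forall>h\<in>H. unitary_mat n (fst (U h))"
   and inv: "\<forall>h\<in>H. Ad_tensor_id (U h) n m Y = Y"
   and irr: "irreducible_rep H n U"
   and a: "a < n" and b: "b < n" and p: "p < m" and q: "q < m"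
  shows "Y $$ (a*m+p, b*m+q) = (if a = b then Y $$ (p,q) else 0)"
proof -
  have Yc: "Y \<in> carrier_mat (n*m) (n*m)" using Y unfolding herm_def by auto
  define G where "G h p q c d = (if snd (U h) then Y $$ (d*m+p, c*m+q) else Y $$ (c*m+p, d*m+q))" for h p q c d
  have K: "Y $$ (a*m+p, b*m+q) = (\<Sum>c<n. \<Sum>d<n. fst (U h) $$ (a,c) * G h p q c d * cnj (fst (U h) $$ (b,d)))"
    if h: "h \<in> H" and a: "a < n" and b: "b < n" and p: "p < m" and q: "q < m" for h a b p q
  proof -
    define Z where "Z = (if snd (U h) then ptranspose_left n m Y else Y)"
    have Zc: "Z \<in> carrier_mat (n*m) (n*m)" using Yc unfolding Z_def ptranspose_left_def by auto
    have Vc: "fst (U h) \<in> carrier_mat n n" using Urep h unitary_carrier by auto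
    have "Y $$ (a*m+p, b*m+q) = Ad_tensor_id (U h) n m Y $$ (a*m+p, b*m+q)" using inv h by simp
    also have "\<dots> = (\<Sum>c<n. \<Sum>d<n. fst (U h) $$ (a,c) * Z $$ (c*m+p, d*m+q) * cnj (fst (U h) $$ (b,d)))"
      unfolding Ad_tensor_id_def Z_def[symmetric] by (rule block_conj[OF Vc Zc a b p q])
    also have "\<dots> = (\<Sum>c<n. \<Sum>d<n. fst (U h) $$ (a,c) * G h p q c d * cnj (fst (U h) $$ (b,d)))"
      using p q by (intro sum.cong refl) (simp add: Z_def G_def ptrans_index)
    finally show ?thesis .
  qed
  have Gc: "G h p q c d = cnj (Y $$ (c*m+q, d*m+p))" if "snd (U h)" "c < n" "d < n" "p < m" "q < m" for h p q c d
    using that herm_index[OF Y, of "d*m+p" "c*m+q"] idx_lt[of c n] idx_lt[of d n] unfolding G_def by simp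
  have Gn: "G h p q c d = Y $$ (c*m+p, d*m+q)" if "\<not> snd (U h)" for h p q c d
    using that unfolding G_def by simp
  define E where "E = mat n n (\<lambda>(a,b). Y $$ (a*m+p, b*m+q) + Y $$ (a*m+q, b*m+p))"
  define F where "F = mat n n (\<lambda>(a,b). \<i> * (Y $$ (a*m+p, b*m+q) - Y $$ (a*m+q, b*m+p)))"
  have Ec: "E \<in> carrier_mat n n" and Fc: "F \<in> carrier_mat n n" unfolding E_def F_def by auto
  have hE: "herm n E"
  proof (rule hermI[OF Ec])
    fix i j assume i: "i < n" and j: "j < n"
    show "E $$ (i,j) = cnj (E $$ (j,i))"
      using i j herm_index[OF Y idx_lt[OF i p] idx_lt[OF j q]] herm_index[OF Y idx_lt[OF i q] idx_lt[OF j p]]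
      unfolding E_def by simp
  qed
  have hF: "herm n F"
  proof (rule hermI[OF Fc])
    fix i j assume i: "i < n" and j: "j < n"
    show "F $$ (i,j) = cnj (F $$ (j,i))"
      using i j herm_index[OF Y idx_lt[OF i p] idx_lt[OF j q]] herm_index[OF Y idx_lt[OF i q] idx_lt[OF j p]]
      unfolding F_def by (simp add: algebra_simps)
  qed
  have invE: "\<forall>h\<in>H. Ad (U h) E = E"
  proof
    fix h assume h: "h \<in> H"
    have Vc: "fst (U h) \<in> carrier_mat n n" using Urep h unitary_carrier by auto
    define X where "X = (if snd (U h) then map_mat cnj E else E)"
    have Xc: "X \<in> carrier_mat n n" using Ec X_def by auto
    have Xe: "X $$ (c,d) = G h p q c d + G h q p c d" if "c < n" "d < n" for c d
      using that p q Gc[of h c d] Gn[of h] unfolding X_def E_def by (auto simp: add.commute)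
    show "Ad (U h) E = E" unfolding Ad_def X_def[symmetric]
    proof (rule Ad_eq_from[OF Vc Xc Ec], intro allI impI)
      fix a b assume a: "a < n" and b: "b < n"
      have "E $$ (a,b) = Y $$ (a*m+p, b*m+q) + Y $$ (a*m+q, b*m+p)" using a b E_def by simp
      also have "\<dots> = (\<Sum>c<n. \<Sum>d<n. fst (U h) $$ (a,c) * (G h p q c d + G h q p c d) * cnj (fst (U h) $$ (b,d)))"
        using K[OF h a b p q] K[OF h a b q p] by (simp add: algebra_simps sum.distrib)
      also have "\<dots> = (\<Sum>c<n. \<Sum>d<n. fst (U h) $$ (a,c) * X $$ (c,d) * cnj (fst (U h) $$ (b,d)))"
        using Xe by simp
      finally show "E $$ (a,b) = (\<Sum>c<n. \<Sum>d<n. fst (U h) $$ (a,c) * X $$ (c,d) * cnj (fst (U h) $$ (b,d)))" .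
    qed
  qed
  have invF: "\<forall>h\<in>H. Ad (U h) F = F"
  proof
    fix h assume h: "h \<in> H"
    have Vc: "fst (U h) \<in> carrier_mat n n" using Urep h unitary_carrier by auto
    define X where "X = (if snd (U h) then map_mat cnj F else F)"
    have Xc: "X \<in> carrier_mat n n" using Fc X_def by auto
    have Xe: "X $$ (c,d) = \<i> * (G h p q c d - G h q p c d)" if "c < n" "d < n" for c d
      using that p q Gc[of h c d] Gn[of h] unfolding X_def F_def by (auto simp: algebra_simps)
    show "Ad (U h) F = F" unfolding Ad_def X_def[symmetric]
    proof (rule Ad_eq_from[OF Vc Xc Fc], intro allI impI)
      fix a b assume a: "a < n" and b: "b < n"
      have "F $$ (a,b) = \<i> * (Y $$ (a*m+p, b*m+q) - Y $$ (a*m+q, b*m+p))" using a b F_def by simp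
      also have "\<dots> = (\<Sum>c<n. \<Sum>d<n. fst (U h) $$ (a,c) * (\<i> * (G h p q c d - G h q p c d)) * cnj (fst (U h) $$ (b,d)))"
        using K[OF h a b p q] K[OF h a b q p] by (simp add: algebra_simps sum_subtractf sum_distrib_left)
      also have "\<dots> = (\<Sum>c<n. \<Sum>d<n. fst (U h) $$ (a,c) * X $$ (c,d) * cnj (fst (U h) $$ (b,d)))"
        using Xe by simp
      finally show "F $$ (a,b) = (\<Sum>c<n. \<Sum>d<n. fst (U h) $$ (a,c) * X $$ (c,d) * cnj (fst (U h) $$ (b,d)))" .
    qed
  qed
  obtain \<alpha> where al: "E = \<alpha> \<cdot>\<^sub>m 1\<^sub>m n" using schur_herm[OF n hE Urep invE irr] by blast
  obtain \<beta> where be: "F = \<beta> \<cdot>\<^sub>m 1\<^sub>m n" using schur_herm[OF n hF Urep invF irr] by blast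
  have key: "Y $$ (a'*m+p, b'*m+q) = (if a' = b' then (\<alpha> - \<i>*\<beta>)/2 else 0)" if a': "a' < n" and b': "b' < n" for a' b'
  proof -
    have "E $$ (a',b') - \<i> * F $$ (a',b') = 2 * Y $$ (a'*m+p, b'*m+q)"
      using a' b' unfolding E_def F_def by (simp add: algebra_simps)
    moreover have "E $$ (a',b') - \<i> * F $$ (a',b') = (if a' = b' then \<alpha> - \<i>*\<beta> else 0)"
      using a' b' unfolding al be by simp
    ultimately show ?thesis by (auto simp: field_simps)
  qed
  show ?thesis using key[OF a b] key[OF n n] by simp
qed



lemma herm_carrier: "herm n A \<Longrightarrow> A \<in> carrier_mat n n" unfolding herm_def by auto
lemma psd_herm: "psd n A \<Longrightarrow> herm n A" unfolding psd_def by auto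

lemma herm_scale: assumes "herm n A" shows "herm n (complex_of_real r \<cdot>\<^sub>m A)"
proof (rule hermI)
  show "complex_of_real r \<cdot>\<^sub>m A \<in> carrier_mat n n" using herm_carrier[OF assms] by auto
  fix i j assume "i < n" "j < n"
  then show "(complex_of_real r \<cdot>\<^sub>m A) $$ (i, j) = cnj ((complex_of_real r \<cdot>\<^sub>m A) $$ (j, i))"
    using herm_index[OF assms \<open>i<n\<close> \<open>j<n\<close>] herm_carrier[OF assms] by simp
qed

lemma smult_smult_mat: "a \<cdot>\<^sub>m (b \<cdot>\<^sub>m A) = (a * b) \<cdot>\<^sub>m (A :: 'a::semigroup_mult mat)"
  by (rule eq_matI) (auto simp: mult.assoc)

lemma pi_tau:
  fixes T :: nat and dV dW :: "nat \<Rightarrow> nat" and \<tau> :: "nat \<Rightarrow> complex mat"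
  assumes tau: "\<forall>t\<in>{1..T}. psd (dV t * Rdim dV dW (t-1)) (\<tau> t)"
    and tr: "\<forall>t\<in>{2..T}. ptr_left (dV t) (Rdim dV dW (t-1)) (\<tau> t) = kron (1\<^sub>m (dW (t-1))) (\<tau> (t-1))"
    and t: "1 \<le> t" "t \<le> T"
  shows "ptr_left (Qdim T dV dW t * dW t) (dV t * Rdim dV dW (t-1)) (kron (1\<^sub>m (dW T)) (\<tau> T)) =
         complex_of_real (real (\<Prod>s\<in>{t..T}. dW s)) \<cdot>\<^sub>m \<tau> t"
  using t
proof (induction "T - t" arbitrary: t)
  case 0
  then have tT: "t = T" by simp
  have c: "\<tau> T \<in> carrier_mat (dV T * Rdim dV dW (T-1)) (dV T * Rdim dV dW (T-1))"
    using tau 0 herm_carrier psd_herm by auto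
  show ?case using ptr_kron_id[OF c, of "dW T"] tT by simp
next
  case (Suc k)
  then have tT: "t < T" by simp
  define M where "M = dV t * Rdim dV dW (t-1)"
  define c where "c = complex_of_real (real (\<Prod>s\<in>{Suc t..T}. dW s))"
  define \<sigma> where "\<sigma> = kron (1\<^sub>m (dW T)) (\<tau> T)"
  have IH: "ptr_left (Qdim T dV dW (Suc t) * dW (Suc t)) (dV (Suc t) * Rdim dV dW t) \<sigma> = c \<cdot>\<^sub>m \<tau> (Suc t)"
    using Suc(1)[of "Suc t"] Suc(2) tT unfolding c_def \<sigma>_def by simp
  have RS: "Rdim dV dW t = dW t * M" unfolding M_def using Rdim_Suc[of dV dW "t-1"] Suc(3) by simp
  have ct: "\<tau> (Suc t) \<in> carrier_mat (dV (Suc t) * Rdim dV dW t) (dV (Suc t) * Rdim dV dW t)"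
    using tau Suc tT herm_carrier psd_herm by (metis Suc_leI atLeastAtMost_iff diff_Suc_1 le_add2 plus_1_eq_Suc le_trans)
  have ct0: "\<tau> t \<in> carrier_mat M M" using tau Suc tT herm_carrier psd_herm M_def by auto
  have trS: "ptr_left (dV (Suc t)) (Rdim dV dW t) (\<tau> (Suc t)) = kron (1\<^sub>m (dW t)) (\<tau> t)"
    using tr Suc(3) tT by (metis Suc_le_mono atLeastAtMost_iff diff_Suc_1 one_add_one plus_1_eq_Suc Suc_leI)
  have Qe: "Qdim T dV dW t * dW t = ((Qdim T dV dW (Suc t) * dW (Suc t)) * dV (Suc t)) * dW t"
    using Qdim_step[OF tT, of dV dW] by (simp add: ac_simps)
  have "ptr_left (Qdim T dV dW t * dW t) M \<sigma> =
        ptr_left (dW t) M (ptr_left ((Qdim T dV dW (Suc t) * dW (Suc t)) * dV (Suc t)) (dW t * M) \<sigma>)"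
    unfolding Qe by (rule ptr_ptr)
  also have "ptr_left ((Qdim T dV dW (Suc t) * dW (Suc t)) * dV (Suc t)) (dW t * M) \<sigma> =
      ptr_left (dV (Suc t)) (Rdim dV dW t) (ptr_left (Qdim T dV dW (Suc t) * dW (Suc t)) (dV (Suc t) * Rdim dV dW t) \<sigma>)"
    unfolding RS by (rule ptr_ptr)
  also have "\<dots> = c \<cdot>\<^sub>m kron (1\<^sub>m (dW t)) (\<tau> t)"
    unfolding IH using ptr_smult[OF ct] trS by simp
  also have "ptr_left (dW t) M (c \<cdot>\<^sub>m kron (1\<^sub>m (dW t)) (\<tau> t)) = c \<cdot>\<^sub>m (of_nat (dW t) \<cdot>\<^sub>m \<tau> t)"
    using ptr_smult[OF kron_carrier[OF one_carrier_mat ct0]] ptr_kron_id[OF ct0] by simp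
  also have "\<dots> = complex_of_real (real (\<Prod>s\<in>{t..T}. dW s)) \<cdot>\<^sub>m \<tau> t"
  proof -
    have "(\<Prod>s\<in>{t..T}. dW s) = dW t * (\<Prod>s\<in>{Suc t..T}. dW s)"
      using tT by (simp add: prod.atLeast_Suc_atMost)
    then show ?thesis unfolding c_def by (simp add: smult_smult_mat mult.commute)
  qed
  finally show ?case unfolding M_def \<sigma>_def .
qed



lemma idx_eq: "p < m \<Longrightarrow> q < (m::nat) \<Longrightarrow> (a*m+p = b*m+q) = (a = b \<and> p = q)"
  by (metis add_right_cancel div_mult_self1 div_less less_nat_zero_code mod_mult_self3 mod_less mult.commute
      add.commute add_0 not_less0 neq0_conv)

lemma block_from_ptr:
  fixes X :: "complex mat"
  assumes X: "X \<in> carrier_mat (n*m) (n*m)" and n: "n > 0"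
    and blk: "\<forall>a<n. \<forall>b<n. \<forall>p<m. \<forall>q<m. X $$ (a*m+p, b*m+q) = (if a = b then X $$ (p,q) else 0)"
    and pt: "ptr_left n m X = z \<cdot>\<^sub>m 1\<^sub>m m"
  shows "X = (z / of_nat n) \<cdot>\<^sub>m 1\<^sub>m (n*m)"
proof -
  have d: "X $$ (p,q) = (if p = q then z / of_nat n else 0)" if p: "p < m" and q: "q < m" for p q
  proof -
    have "ptr_left n m X $$ (p,q) = (\<Sum>k<n. X $$ (k*m+p, k*m+q))" by (rule ptr_index[OF p q])
    also have "\<dots> = (\<Sum>k<n. X $$ (p,q))" using blk p q by (intro sum.cong refl) auto
    also have "\<dots> = of_nat n * X $$ (p,q)" by simp
    finally have "of_nat n * X $$ (p,q) = (if p = q then z else 0)" using pt p q by (cases "p = q") auto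
    then show ?thesis using n by (auto simp: field_simps)
  qed
  show ?thesis
  proof (rule eq_matI)
    fix i j assume "i < dim_row ((z / of_nat n) \<cdot>\<^sub>m 1\<^sub>m (n*m))" "j < dim_col ((z / of_nat n) \<cdot>\<^sub>m 1\<^sub>m (n*m))"
    then have i: "i < n*m" and j: "j < n*m" by auto
    obtain a p where ia: "i = a*m+p" "a < n" "p < m" using idx_decomp[OF i] by blast
    obtain b q where jb: "j = b*m+q" "b < n" "q < m" using idx_decomp[OF j] by blast
    have "X $$ (i,j) = (if a = b \<and> p = q then z / of_nat n else 0)"
      unfolding ia(1) jb(1) using blk ia jb d by auto
    also have "\<dots> = ((z / of_nat n) \<cdot>\<^sub>m 1\<^sub>m (n*m)) $$ (i,j)"
      using i j unfolding ia(1) jb(1) using idx_eq[OF ia(3) jb(3)] by simp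
    finally show "X $$ (i,j) = ((z / of_nat n) \<cdot>\<^sub>m 1\<^sub>m (n*m)) $$ (i,j)" .
  qed (use X in auto)
qed



lemma SG_inv_id:
  fixes T :: nat and dV dW :: "nat \<Rightarrow> nat" and U :: "nat \<Rightarrow> 'g \<Rightarrow> complex mat \<times> bool" and H :: "nat \<Rightarrow> 'g set"
  assumes T1: "1 \<le> T" and dims: "\<forall>t\<in>{1..T}. 1 \<le> dV t \<and> 1 \<le> dW t"
    and sig: "\<sigma> \<in> S_G T dV dW"
    and Urep: "\<forall>t\<in>{1..T}. \<forall>h\<in>H t. unitary_mat (dV t) (fst (U t h))"
    and irr: "\<forall>t\<in>{1..T}. irreducible_rep (H t) (dV t) (U t)"
    and inv: "\<forall>t\<in>{1..T}. \<forall>h\<in>H t.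
        Ad_tensor_id (U t h) (dV t) (Rdim dV dW (t-1)) (ptr_left (Qdim T dV dW t * dW t) (dV t * Rdim dV dW (t-1)) \<sigma>)
        = ptr_left (Qdim T dV dW t * dW t) (dV t * Rdim dV dW (t-1)) \<sigma>"
  shows "\<sigma> = (1 / of_nat (\<Prod>t\<in>{1..T}. dV t)) \<cdot>\<^sub>m 1\<^sub>m (Rdim dV dW T)"
proof -
  obtain \<tau> where sd: "\<sigma> = kron (1\<^sub>m (dW T)) (\<tau> T)"
    and tau: "\<forall>t\<in>{1..T}. psd (dV t * Rdim dV dW (t-1)) (\<tau> t)" and tr1: "mtrace (\<tau> 1) = 1"
    and tr: "\<forall>t\<in>{2..T}. ptr_left (dV t) (Rdim dV dW (t-1)) (\<tau> t) = kron (1\<^sub>m (dW (t-1))) (\<tau> (t-1))"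
    using sig unfolding S_G_def by blast
  have dpos: "0 < dV s \<and> 0 < dW s" if "1 \<le> s" "s \<le> T" for s
  proof -
    have "s \<in> {1..T}" using that by auto
    then have "1 \<le> dV s \<and> 1 \<le> dW s" using dims by blast
    then show ?thesis by auto
  qed
  have blk: "\<forall>a<dV t. \<forall>b<dV t. \<forall>p<Rdim dV dW (t-1). \<forall>q<Rdim dV dW (t-1).
      \<tau> t $$ (a*Rdim dV dW (t-1)+p, b*Rdim dV dW (t-1)+q) = (if a = b then \<tau> t $$ (p,q) else 0)"
    if t: "1 \<le> t" "t \<le> T" for t
  proof (intro allI impI)
    fix a b p q assume a: "a < dV t" and b: "b < dV t" and p: "p < Rdim dV dW (t-1)" and q: "q < Rdim dV dW (t-1)"
    define m where "m = Rdim dV dW (t-1)"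
    define r where "r = real (\<Prod>s\<in>{t..T}. dW s)"
    define \<pi> where "\<pi> = ptr_left (Qdim T dV dW t * dW t) (dV t * m) \<sigma>"
    have pe: "\<pi> = complex_of_real r \<cdot>\<^sub>m \<tau> t" unfolding \<pi>_def r_def m_def sd
      by (rule pi_tau[OF tau tr t])
    have ht: "herm (dV t * m) (\<tau> t)" using tau t psd_herm m_def by auto
    have hp: "herm (dV t * m) \<pi>" unfolding pe by (rule herm_scale[OF ht])
    have "\<forall>s\<in>{t..T}. 0 < dW s"
    proof
      fix s assume "s \<in> {t..T}"
      then have "s \<in> {1..T}" using t by auto
      then show "0 < dW s" using dims by fastforce
    qed
    then have "0 < (\<Prod>s\<in>{t..T}. dW s)" by (intro prod_pos) blast
    then have r0: "r \<noteq> 0" unfolding r_def by simp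
    have n: "dV t > 0" using dpos t by auto
    have am: "a*m+p < dV t * m" "b*m+q < dV t * m" "p < dV t * m" "q < dV t * m"
      using idx_lt[OF a p[folded m_def]] idx_lt[OF b q[folded m_def]] idx_lt[OF n p[folded m_def]] idx_lt[OF n q[folded m_def]] by auto
    have "\<pi> $$ (a*m+p, b*m+q) = (if a = b then \<pi> $$ (p,q) else 0)"
    proof -
      have tin: "t \<in> {1..T}" using t by auto
      show ?thesis
        by (rule block_schur[OF n hp bspec[OF Urep tin] _ bspec[OF irr tin] a b p[folded m_def] q[folded m_def]])
           (use bspec[OF inv tin] in \<open>simp add: \<pi>_def m_def\<close>)
    qed
    then have "complex_of_real r * \<tau> t $$ (a*m+p, b*m+q) = (if a = b then complex_of_real r * \<tau> t $$ (p,q) else 0)"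
    proof -
      have tc: "\<tau> t \<in> carrier_mat (dV t * m) (dV t * m)" using herm_carrier[OF ht] .
      have e1: "\<pi> $$ (a*m+p, b*m+q) = complex_of_real r * \<tau> t $$ (a*m+p, b*m+q)" using am tc pe by simp
      have e2: "\<pi> $$ (p, q) = complex_of_real r * \<tau> t $$ (p, q)" using am tc pe by simp
      have e3: "\<pi> $$ (a*m+p, b*m+q) = (if a = b then \<pi> $$ (p,q) else 0)" by fact
      show ?thesis by (cases "a = b") (metis e1 e2 e3)+
    qed
    then show "\<tau> t $$ (a*Rdim dV dW (t-1)+p, b*Rdim dV dW (t-1)+q) = (if a = b then \<tau> t $$ (p,q) else 0)"
      using r0 unfolding m_def by (auto split: if_splits)
  qed
  have main: "\<tau> t = (1 / of_nat (\<Prod>s\<in>{1..t}. dV s)) \<cdot>\<^sub>m 1\<^sub>m (dV t * Rdim dV dW (t-1))"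
    if "1 \<le> t" "t \<le> T" for t
    using that
  proof (induction t)
    case 0 then show ?case by simp
  next
    case (Suc t)
    have n: "dV (Suc t) > 0" using dpos Suc by auto
    have c: "\<tau> (Suc t) \<in> carrier_mat (dV (Suc t) * Rdim dV dW t) (dV (Suc t) * Rdim dV dW t)"
      using tau Suc psd_herm herm_carrier by fastforce
    show ?case
    proof (cases "t = 0")
      case True
      have pt: "ptr_left (dV 1) 1 (\<tau> 1) = 1 \<cdot>\<^sub>m 1\<^sub>m 1"
      proof (rule eq_matI)
        fix i j assume "i < dim_row ((1::complex) \<cdot>\<^sub>m 1\<^sub>m 1)" "j < dim_col ((1::complex) \<cdot>\<^sub>m 1\<^sub>m 1)"
        then have ij: "i = 0" "j = 0" by auto
        have "ptr_left (dV 1) 1 (\<tau> 1) $$ (0,0) = (\<Sum>k<dV 1. \<tau> 1 $$ (k,k))" by (simp add: ptr_index)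
        also have "\<dots> = mtrace (\<tau> 1)" using c True by (simp add: mtrace_carrier)
        finally show "ptr_left (dV 1) 1 (\<tau> 1) $$ (i,j) = ((1::complex) \<cdot>\<^sub>m 1\<^sub>m 1) $$ (i,j)" using ij tr1 by simp
      qed auto
      have c1: "\<tau> 1 \<in> carrier_mat (dV 1 * 1) (dV 1 * 1)" using c True by simp
      have n1: "dV 1 > 0" using n True by simp
      have b1: "\<forall>a<dV 1. \<forall>b<dV 1. \<forall>p<1. \<forall>q<1. \<tau> 1 $$ (a*1+p, b*1+q) = (if a = b then \<tau> 1 $$ (p,q) else 0)"
        using blk[of 1] T1 by simp
      have "\<tau> 1 = (1 / of_nat (dV 1)) \<cdot>\<^sub>m 1\<^sub>m (dV 1 * 1)"
        using block_from_ptr[OF c1 n1 b1 pt] by simp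
      then show ?thesis using True by simp
    next
      case False
      have IH: "\<tau> t = (1 / of_nat (\<Prod>s\<in>{1..t}. dV s)) \<cdot>\<^sub>m 1\<^sub>m (dV t * Rdim dV dW (t-1))"
        using Suc False by simp
      have RS: "Rdim dV dW t = dW t * (dV t * Rdim dV dW (t-1))"
        using Rdim_Suc[of dV dW "t-1"] False by (simp add: ac_simps)
      have "ptr_left (dV (Suc t)) (Rdim dV dW t) (\<tau> (Suc t)) = kron (1\<^sub>m (dW t)) (\<tau> t)"
      proof -
        have "Suc t \<in> {2..T}" using Suc False by auto
        from bspec[OF tr this] show ?thesis by simp
      qed
      also have "\<dots> = (1 / of_nat (\<Prod>s\<in>{1..t}. dV s)) \<cdot>\<^sub>m 1\<^sub>m (Rdim dV dW t)"
        unfolding IH RS by (rule kron_id_smult)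
      finally have pt: "ptr_left (dV (Suc t)) (Rdim dV dW t) (\<tau> (Suc t)) = (1 / of_nat (\<Prod>s\<in>{1..t}. dV s)) \<cdot>\<^sub>m 1\<^sub>m (Rdim dV dW t)" .
      have "\<tau> (Suc t) = ((1 / of_nat (\<Prod>s\<in>{1..t}. dV s)) / of_nat (dV (Suc t))) \<cdot>\<^sub>m 1\<^sub>m (dV (Suc t) * Rdim dV dW t)"
        by (rule block_from_ptr[OF c n _ pt]) (use blk[of "Suc t"] Suc in auto)
      moreover have "(\<Prod>s\<in>{1..Suc t}. dV s) = dV (Suc t) * (\<Prod>s\<in>{1..t}. dV s)"
        by (simp add: prod.nat_ivl_Suc')
      ultimately show ?thesis by (simp add: field_simps)
    qed
  qed
  have RT: "Rdim dV dW T = dW T * (dV T * Rdim dV dW (T-1))"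
    using Rdim_Suc[of dV dW "T-1"] T1 by (simp add: ac_simps)
  show ?thesis unfolding sd main[OF T1 le_refl] RT by (rule kron_id_smult)
qed



lemma psd_scaled_id: assumes "r \<ge> 0" shows "psd n (complex_of_real r \<cdot>\<^sub>m 1\<^sub>m n)"
  unfolding psd_def
proof (intro conjI ballI)
  show "herm n (complex_of_real r \<cdot>\<^sub>m 1\<^sub>m n)" by (rule hermI) auto
  fix v :: "complex vec" assume v: "v \<in> carrier_vec n"
  have "(complex_of_real r \<cdot>\<^sub>m 1\<^sub>m n) *\<^sub>v v = complex_of_real r \<cdot>\<^sub>v v"
  proof (rule eq_vecI)
    fix i assume "i < dim_vec (complex_of_real r \<cdot>\<^sub>v v)"
    hence i: "i < n" using v by auto
    have "((complex_of_real r \<cdot>\<^sub>m 1\<^sub>m n) *\<^sub>v v) $ i = (\<Sum>j<n. (complex_of_real r \<cdot>\<^sub>m 1\<^sub>m n) $$ (i,j) * v $ j)"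
      by (rule mv_index) (use v i in auto)
    also have "\<dots> = (\<Sum>j<n. (if j = i then complex_of_real r * v $ j else 0))"
      using i by (intro sum.cong refl) auto
    also have "\<dots> = complex_of_real r * v $ i" using i by simp
    finally show "((complex_of_real r \<cdot>\<^sub>m 1\<^sub>m n) *\<^sub>v v) $ i = (complex_of_real r \<cdot>\<^sub>v v) $ i" using i v by simp
  qed (use v in auto)
  then have "conjugate v \<bullet> ((complex_of_real r \<cdot>\<^sub>m 1\<^sub>m n) *\<^sub>v v) = complex_of_real r * (\<Sum>i<n. cnj (v$i) * v$i)"
    using v by (simp add: scalar_prod_def lessThan_atLeast0 sum_distrib_left ac_simps)
  also have "\<dots> = complex_of_real (r * (\<Sum>i<n. (cmod (v$i))^2))"
    by (simp add: sum_distrib_left) (intro sum.cong refl; metis complex_norm_square mult.commute of_real_power)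
  finally show "0 \<le> Re (conjugate v \<bullet> ((complex_of_real r \<cdot>\<^sub>m 1\<^sub>m n) *\<^sub>v v))"
    using assms by (simp del: of_real_mult of_real_sum of_real_power add: sum_nonneg)
qed

lemma ptr_scaled_id: "ptr_left n m (c \<cdot>\<^sub>m 1\<^sub>m (n*m) :: complex mat) = (of_nat n * c) \<cdot>\<^sub>m 1\<^sub>m m"
proof -
  have "c \<cdot>\<^sub>m 1\<^sub>m (n*m) = kron (1\<^sub>m n) (c \<cdot>\<^sub>m 1\<^sub>m m)" by (rule kron_id_smult[symmetric])
  then show ?thesis using ptr_kron_id[of "c \<cdot>\<^sub>m 1\<^sub>m m" m n] by (simp add: smult_smult_mat)
qed

lemma id_in_SG:
  fixes T :: nat and dV dW :: "nat \<Rightarrow> nat"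
  assumes T1: "1 \<le> T" and dims: "\<forall>t\<in>{1..T}. 1 \<le> dV t \<and> 1 \<le> dW t"
  shows "(1 / of_nat (\<Prod>t\<in>{1..T}. dV t)) \<cdot>\<^sub>m 1\<^sub>m (Rdim dV dW T) \<in> S_G T dV dW"
proof -
  define \<tau> :: "nat \<Rightarrow> complex mat" where "\<tau> t = (1 / of_nat (\<Prod>s\<in>{1..t}. dV s)) \<cdot>\<^sub>m 1\<^sub>m (dV t * Rdim dV dW (t-1))" for t
  have dpos: "0 < dV s \<and> 0 < dW s" if "1 \<le> s" "s \<le> T" for s
  proof -
    have "s \<in> {1..T}" using that by auto
    then have "1 \<le> dV s \<and> 1 \<le> dW s" using dims by blast
    then show ?thesis by auto
  qed
  have tre: "(1 / of_nat k :: complex) = complex_of_real (1 / real k)" for k by simp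
  have "\<forall>t\<in>{1..T}. psd (dV t * Rdim dV dW (t-1)) (\<tau> t)"
    unfolding \<tau>_def tre by (intro ballI psd_scaled_id) (simp add: prod_nonneg)
  moreover have "mtrace (\<tau> 1) = 1"
    unfolding \<tau>_def mtrace_def using dpos[OF le_refl T1] by simp
  moreover have "\<forall>t\<in>{2..T}. ptr_left (dV t) (Rdim dV dW (t-1)) (\<tau> t) = kron (1\<^sub>m (dW (t-1))) (\<tau> (t-1))"
  proof
    fix t assume t: "t \<in> {2..T}"
    then obtain s where s: "t = Suc s" "1 \<le> s" by (metis atLeastAtMost_iff Suc_le_D Suc_1 Suc_le_mono)
    have RS: "Rdim dV dW s = dW s * (dV s * Rdim dV dW (s-1))"
      using Rdim_Suc[of dV dW "s-1"] s by (simp add: ac_simps)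
    have P: "(\<Prod>i\<in>{1..Suc s}. dV i) = dV (Suc s) * (\<Prod>i\<in>{1..s}. dV i)" by (simp add: prod.nat_ivl_Suc')
    have d: "dV (Suc s) > 0" using dpos[of "Suc s"] s t by auto
    have "ptr_left (dV t) (Rdim dV dW (t-1)) (\<tau> t) = (of_nat (dV t) * (1 / of_nat (\<Prod>i\<in>{1..t}. dV i))) \<cdot>\<^sub>m 1\<^sub>m (Rdim dV dW s)"
      unfolding \<tau>_def using s ptr_scaled_id by simp
    also have "\<dots> = (1 / of_nat (\<Prod>i\<in>{1..s}. dV i)) \<cdot>\<^sub>m 1\<^sub>m (Rdim dV dW s)"
      unfolding s(1) P using d by simp
    also have "\<dots> = kron (1\<^sub>m (dW s)) (\<tau> s)" unfolding \<tau>_def RS by (rule kron_id_smult[symmetric])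
    finally show "ptr_left (dV t) (Rdim dV dW (t-1)) (\<tau> t) = kron (1\<^sub>m (dW (t-1))) (\<tau> (t-1))" using s by simp
  qed
  moreover have "kron (1\<^sub>m (dW T)) (\<tau> T) = (1 / of_nat (\<Prod>t\<in>{1..T}. dV t)) \<cdot>\<^sub>m 1\<^sub>m (Rdim dV dW T)"
  proof -
    have RT: "Rdim dV dW T = dW T * (dV T * Rdim dV dW (T-1))"
      using Rdim_Suc[of dV dW "T-1"] T1 by (simp add: ac_simps)
    show ?thesis unfolding \<tau>_def RT by (rule kron_id_smult)
  qed
  ultimately have facts: "(\<forall>t\<in>{1..T}. psd (dV t * Rdim dV dW (t-1)) (\<tau> t)) \<and> mtrace (\<tau> 1) = 1 \<and>
     (\<forall>t\<in>{2..T}. ptr_left (dV t) (Rdim dV dW (t-1)) (\<tau> t) = kron (1\<^sub>m (dW (t-1))) (\<tau> (t-1))) \<and>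
     (1 / of_nat (\<Prod>t\<in>{1..T}. dV t)) \<cdot>\<^sub>m 1\<^sub>m (Rdim dV dW T) = kron (1\<^sub>m (dW T)) (\<tau> T)" by simp
  show ?thesis unfolding S_G_def by (rule CollectI, rule exI[of _ \<tau>]) (use facts in blast)
qed



lemma hs_inner_formula: assumes X: "X \<in> carrier_mat D D" and Y: "Y \<in> carrier_mat D D"
  shows "hs_inner X Y = Re (\<Sum>i<D. \<Sum>k<D. X $$ (i,k) * Y $$ (k,i))"
proof -
  have XY: "X * Y \<in> carrier_mat D D" using X Y by auto
  show ?thesis unfolding hs_inner_def mtrace_carrier[OF XY] using mm_index[OF X Y] by simp
qed

definition msumS :: "nat \<Rightarrow> 'b set \<Rightarrow> ('b \<Rightarrow> complex mat) \<Rightarrow> complex mat" where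
  "msumS D S f = mat D D (\<lambda>(i,j). \<Sum>x\<in>S. f x $$ (i,j))"

lemma msumS_carrier[simp]: "msumS D S f \<in> carrier_mat D D" unfolding msumS_def by auto

lemma msumS_herm: assumes "\<forall>x\<in>S. herm D (f x)" shows "herm D (msumS D S f)"
proof (rule hermI)
  fix i j assume i: "i < D" and j: "j < D"
  show "msumS D S f $$ (i,j) = cnj (msumS D S f $$ (j,i))"
    unfolding msumS_def using i j assms herm_index[OF _ i j] by (simp add: cnj_sum)
qed simp

lemma msum_is_msumS: "msum M D \<Phi> = msumS D {..<M} \<Phi>"
  unfolding msum_def msumS_def ..

lemma ha_herm: "her_action G D a \<Longrightarrow> g \<in> carrier G \<Longrightarrow> herm D X \<Longrightarrow> herm D (a g X)"
  unfolding her_action_def by blast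
lemma ha_one: "her_action G D a \<Longrightarrow> herm D X \<Longrightarrow> a \<one>\<^bsub>G\<^esub> X = X"
  unfolding her_action_def by blast
lemma ha_mult: "her_action G D a \<Longrightarrow> g \<in> carrier G \<Longrightarrow> h \<in> carrier G \<Longrightarrow> herm D X \<Longrightarrow> a (g \<otimes>\<^bsub>G\<^esub> h) X = a g (a h X)"
  unfolding her_action_def by blast
lemma ha_add: "her_action G D a \<Longrightarrow> g \<in> carrier G \<Longrightarrow> herm D X \<Longrightarrow> herm D Y \<Longrightarrow> a g (X + Y) = a g X + a g Y"
  unfolding her_action_def by blast
lemma ha_smult: "her_action G D a \<Longrightarrow> g \<in> carrier G \<Longrightarrow> herm D X \<Longrightarrow> a g (complex_of_real r \<cdot>\<^sub>m X) = complex_of_real r \<cdot>\<^sub>m a g X"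
  unfolding her_action_def by blast
lemma ha_inner: "her_action G D a \<Longrightarrow> g \<in> carrier G \<Longrightarrow> herm D X \<Longrightarrow> herm D Y \<Longrightarrow> hs_inner (a g X) (a g Y) = hs_inner X Y"
  unfolding her_action_def by blast

lemma act_zero: assumes act: "her_action G D act" and g: "g \<in> carrier G"
  shows "act g (0\<^sub>m D D) = 0\<^sub>m D D"
proof -
  have h0: "herm D (0\<^sub>m D D)" by (rule hermI) auto
  have "0\<^sub>m D D = complex_of_real 0 \<cdot>\<^sub>m (0\<^sub>m D D :: complex mat)" by (rule eq_matI) auto
  then have "act g (0\<^sub>m D D) = complex_of_real 0 \<cdot>\<^sub>m act g (0\<^sub>m D D)"
    using ha_smult[OF act g h0] \<open>0\<^sub>m D D = complex_of_real 0 \<cdot>\<^sub>m (0\<^sub>m D D :: complex mat)\<close> by metis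
  also have "\<dots> = 0\<^sub>m D D"
  proof -
    have c: "act g (0\<^sub>m D D) \<in> carrier_mat D D" using herm_carrier[OF ha_herm[OF act g h0]] .
    show ?thesis by (rule eq_matI) (use c in simp_all)
  qed
  finally show ?thesis .
qed

lemma act_msumS: assumes act: "her_action G D act" and g: "g \<in> carrier G" and fin: "finite S"
  and h: "\<forall>x\<in>S. herm D (f x)"
  shows "act g (msumS D S f) = msumS D S (\<lambda>x. act g (f x))"
  using fin h
proof (induction S rule: finite_induct)
  case empty
  have "msumS D {} f = 0\<^sub>m D D" "msumS D {} (\<lambda>x. act g (f x)) = 0\<^sub>m D D"
    unfolding msumS_def by (auto intro!: eq_matI)
  then show ?case using act_zero[OF act g] by simp
next
  case (insert x F)
  have fx: "herm D (f x)" using insert by auto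
  have hF: "herm D (msumS D F f)" using insert by (auto intro: msumS_herm)
  have e1: "msumS D (insert x F) f = f x + msumS D F f"
    using insert herm_carrier[OF fx] unfolding msumS_def by (intro eq_matI) auto
  have afx: "act g (f x) \<in> carrier_mat D D" using herm_carrier[OF ha_herm[OF act g fx]] .
  have e2: "msumS D (insert x F) (\<lambda>x. act g (f x)) = act g (f x) + msumS D F (\<lambda>x. act g (f x))"
    using insert afx unfolding msumS_def by (intro eq_matI) auto
  have "act g (f x + msumS D F f) = act g (f x) + act g (msumS D F f)"
    by (rule ha_add[OF act g fx hF])
  then show ?case unfolding e1 e2 using insert by simp
qed

definition tavg :: "nat \<Rightarrow> 'b set \<Rightarrow> ('b \<Rightarrow> nat \<Rightarrow> complex mat) \<Rightarrow> nat \<Rightarrow> complex mat" where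
  "tavg D S f = (\<lambda>m. mat D D (\<lambda>(i,j). (\<Sum>g\<in>S. f g m $$ (i,j)) / of_nat (card S)))"

lemma convex_avg: assumes cv: "tuple_convex A" and fin: "finite S" and ne: "S \<noteq> {}"
  and inA: "\<forall>g\<in>S. f g \<in> A" and car: "\<forall>g\<in>S. \<forall>m. f g m \<in> carrier_mat D D"
  shows "tavg D S f \<in> A"
  using fin ne inA car
proof (induction S rule: finite_ne_induct)
  case (singleton x)
  have tx: "tavg D {x} f = f x"
  proof
    fix m
    have c: "f x m \<in> carrier_mat D D" using singleton by auto
    show "tavg D {x} f m = f x m" unfolding tavg_def by (rule eq_matI) (use c in auto)
  qed
  have "f x \<in> A" using singleton by blast
  then show ?case unfolding tx .
next
  case (insert x F)
  define n where "n = card F"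
  have n: "n > 0" using insert.hyps unfolding n_def by (simp add: card_gt_0_iff)
  define u where "u = 1 / (real n + 1)"
  have u: "0 \<le> u" "u \<le> 1" unfolding u_def by auto
  have "(\<lambda>m. complex_of_real u \<cdot>\<^sub>m f x m + complex_of_real (1 - u) \<cdot>\<^sub>m tavg D F f m) \<in> A"
  proof -
    have a1: "f x \<in> A" using insert.prems by blast
    have a2: "tavg D F f \<in> A" using insert.IH insert.prems by blast
    show ?thesis using cv a1 a2 u unfolding tuple_convex_def by blast
  qed
  moreover have "(\<lambda>m. complex_of_real u \<cdot>\<^sub>m f x m + complex_of_real (1 - u) \<cdot>\<^sub>m tavg D F f m) = tavg D (insert x F) f"
  proof (intro ext eq_matI)
    fix m i j assume "i < dim_row (tavg D (insert x F) f m)" "j < dim_col (tavg D (insert x F) f m)"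
    then have i: "i < D" and j: "j < D" unfolding tavg_def by auto
    have fx: "f x m \<in> carrier_mat D D" using insert.prems by blast
    have c: "card (insert x F) = n + 1" using insert.hyps unfolding n_def by simp
    have "(complex_of_real u \<cdot>\<^sub>m f x m + complex_of_real (1 - u) \<cdot>\<^sub>m tavg D F f m) $$ (i,j)
        = complex_of_real u * f x m $$ (i,j) + complex_of_real (1-u) * ((\<Sum>g\<in>F. f g m $$ (i,j)) / of_nat n)"
      using i j fx unfolding tavg_def n_def by simp
    also have "\<dots> = (f x m $$ (i,j) + (\<Sum>g\<in>F. f g m $$ (i,j))) / of_nat (n+1)"
    proof -
      have nz: "(of_nat n :: complex) \<noteq> 0" "(1 + of_nat n :: complex) \<noteq> 0" "(of_nat n + 1 :: complex) \<noteq> 0" using n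
        using of_nat_neq_0[of n, where 'a=complex] by (simp_all add: add.commute)
      have alg: "\<And>N a s::complex. N \<noteq> 0 \<Longrightarrow> N + 1 \<noteq> 0 \<Longrightarrow> (1/(N+1))*a + (N/(N+1))*(s/N) = (a+s)/(N+1)"
        by (simp add: add_divide_distrib)
      have r1: "real n + 1 \<noteq> 0" by simp
      have cu1: "complex_of_real u = 1/(of_nat n + 1)" unfolding u_def by simp
      have cu2: "complex_of_real (1 - u) = of_nat n/(of_nat n + 1)"
      proof -
        have "1 - u = real n / (real n + 1)" unfolding u_def using r1 by (simp add: field_simps)
        then show ?thesis by simp
      qed
      show ?thesis unfolding cu1 cu2 using alg[OF nz(1) nz(3)] by simp
    qed
    also have "\<dots> = tavg D (insert x F) f m $$ (i,j)"
      unfolding tavg_def using i j insert.hyps c by simp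
    finally show "(complex_of_real u \<cdot>\<^sub>m f x m + complex_of_real (1 - u) \<cdot>\<^sub>m tavg D F f m) $$ (i,j) = tavg D (insert x F) f m $$ (i,j)" .
  qed (use insert.prems(2) in \<open>auto simp: tavg_def\<close>)
  ultimately show ?case by simp
qed

lemma hs_inner_tavg: assumes fin: "finite S" and ne: "S \<noteq> {}" and car: "\<forall>g\<in>S. f g m \<in> carrier_mat D D"
  and C: "C \<in> carrier_mat D D"
  shows "hs_inner (tavg D S f m) C = (\<Sum>g\<in>S. hs_inner (f g m) C) / real (card S)"
proof -
  have tc: "tavg D S f m \<in> carrier_mat D D" unfolding tavg_def by auto
  have "hs_inner (tavg D S f m) C = Re (\<Sum>i<D. \<Sum>k<D. ((\<Sum>g\<in>S. f g m $$ (i,k)) / of_nat (card S)) * C $$ (k,i))"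
    unfolding hs_inner_formula[OF tc C] unfolding tavg_def by simp
  also have "\<dots> = Re (\<Sum>i<D. \<Sum>k<D. \<Sum>g\<in>S. f g m $$ (i,k) * C $$ (k,i) / of_nat (card S))"
    by (simp add: sum_divide_distrib sum_distrib_right)
  also have "(\<Sum>i<D. \<Sum>k<D. \<Sum>g\<in>S. f g m $$ (i,k) * C $$ (k,i) / of_nat (card S)) =
      (\<Sum>i<D. \<Sum>g\<in>S. \<Sum>k<D. f g m $$ (i,k) * C $$ (k,i) / of_nat (card S))"
    by (rule sum.cong[OF refl], rule sum.swap)
  also have "\<dots> = (\<Sum>g\<in>S. \<Sum>i<D. \<Sum>k<D. f g m $$ (i,k) * C $$ (k,i) / of_nat (card S))"
    by (rule sum.swap)
  also have "\<dots> = (\<Sum>g\<in>S. (\<Sum>i<D. \<Sum>k<D. f g m $$ (i,k) * C $$ (k,i)) / of_nat (card S))"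
    by (simp add: sum_divide_distrib)
  also have "Re \<dots> = (\<Sum>g\<in>S. Re (\<Sum>i<D. \<Sum>k<D. f g m $$ (i,k) * C $$ (k,i))) / real (card S)"
    by (simp only: Re_sum Re_divide_of_nat sum_divide_distrib)
  also have "\<dots> = (\<Sum>g\<in>S. hs_inner (f g m) C) / real (card S)"
    using car hs_inner_formula[OF _ C] by simp
  finally show ?thesis .
qed

lemma hs_inner_comb: assumes A: "A \<in> carrier_mat D D" and B: "B \<in> carrier_mat D D" and C: "C \<in> carrier_mat D D"
  shows "hs_inner (complex_of_real u \<cdot>\<^sub>m A + complex_of_real v \<cdot>\<^sub>m B) C = u * hs_inner A C + v * hs_inner B C"
proof -
  have c: "complex_of_real u \<cdot>\<^sub>m A + complex_of_real v \<cdot>\<^sub>m B \<in> carrier_mat D D" using A B by auto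
  have "hs_inner (complex_of_real u \<cdot>\<^sub>m A + complex_of_real v \<cdot>\<^sub>m B) C =
     Re (complex_of_real u * (\<Sum>i<D. \<Sum>k<D. A $$ (i,k) * C $$ (k,i)) + complex_of_real v * (\<Sum>i<D. \<Sum>k<D. B $$ (i,k) * C $$ (k,i)))"
    unfolding hs_inner_formula[OF c C] using A B
    by (simp add: sum_distrib_left sum.distrib algebra_simps)
  also have "\<dots> = u * hs_inner A C + v * hs_inner B C"
    unfolding hs_inner_formula[OF A C] hs_inner_formula[OF B C] by simp
  finally show ?thesis .
qed

lemma idx_bij: assumes grp: "group G" and act: "index_action G n a" and g: "g \<in> carrier G"
  shows "bij_betw (a g) {..<n} {..<n}"
proof (rule bij_betw_byWitness[of _ "a (inv\<^bsub>G\<^esub> g)"])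
  have ig: "inv\<^bsub>G\<^esub> g \<in> carrier G" using group.inv_closed[OF grp g] .
  show "\<forall>x\<in>{..<n}. a (inv\<^bsub>G\<^esub> g) (a g x) = x"
    using act ig g group.l_inv[OF grp g] unfolding index_action_def by (metis lessThan_iff)
  show "\<forall>x\<in>{..<n}. a g (a (inv\<^bsub>G\<^esub> g) x) = x"
    using act ig g group.r_inv[OF grp g] unfolding index_action_def by (metis lessThan_iff)
  show "a g ` {..<n} \<subseteq> {..<n}" using act g unfolding index_action_def by auto
  show "a (inv\<^bsub>G\<^esub> g) ` {..<n} \<subseteq> {..<n}" using act ig unfolding index_action_def by auto
qed

lemma act_inv_cancel: assumes grp: "group G" and act: "her_action G D a" and g: "g \<in> carrier G" and X: "herm D X"
  shows "a g (a (inv\<^bsub>G\<^esub> g) X) = X"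
proof -
  have ig: "inv\<^bsub>G\<^esub> g \<in> carrier G" using group.inv_closed[OF grp g] .
  have "a g (a (inv\<^bsub>G\<^esub> g) X) = a (g \<otimes>\<^bsub>G\<^esub> inv\<^bsub>G\<^esub> g) X" using ha_mult[OF act g ig X] by simp
  also have "\<dots> = X" using ha_one[OF act X] group.r_inv[OF grp g] by simp
  finally show ?thesis .
qed

lemma act_inner_inv: assumes grp: "group G" and act: "her_action G D a" and g: "g \<in> carrier G"
  and X: "herm D X" and Y: "herm D Y"
  shows "hs_inner (a (inv\<^bsub>G\<^esub> g) X) Y = hs_inner X (a g Y)"
proof -
  have ig: "inv\<^bsub>G\<^esub> g \<in> carrier G" using group.inv_closed[OF grp g] .
  have hX: "herm D (a (inv\<^bsub>G\<^esub> g) X)" by (rule ha_herm[OF act ig X])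
  have "hs_inner (a (inv\<^bsub>G\<^esub> g) X) Y = hs_inner (a g (a (inv\<^bsub>G\<^esub> g) X)) (a g Y)"
    using ha_inner[OF act g hX Y] by simp
  then show ?thesis using act_inv_cancel[OF grp act g X] by simp
qed



lemma right_mult_bij: assumes grp: "group G" and h: "h \<in> carrier G"
  shows "bij_betw (\<lambda>g. g \<otimes>\<^bsub>G\<^esub> inv\<^bsub>G\<^esub> h) (carrier G) (carrier G)"
proof (rule bij_betw_byWitness[of _ "\<lambda>g. g \<otimes>\<^bsub>G\<^esub> h"])
  have ih: "inv\<^bsub>G\<^esub> h \<in> carrier G" using group.inv_closed[OF grp h] .
  show "\<forall>a\<in>carrier G. a \<otimes>\<^bsub>G\<^esub> inv\<^bsub>G\<^esub> h \<otimes>\<^bsub>G\<^esub> h = a"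
    using grp h ih by (simp add: group.is_monoid monoid.m_assoc group.l_inv monoid.r_one)
  show "\<forall>a\<in>carrier G. a \<otimes>\<^bsub>G\<^esub> h \<otimes>\<^bsub>G\<^esub> inv\<^bsub>G\<^esub> h = a"
    using grp h ih by (simp add: group.is_monoid monoid.m_assoc group.r_inv monoid.r_one)
  show "(\<lambda>g. g \<otimes>\<^bsub>G\<^esub> inv\<^bsub>G\<^esub> h) ` carrier G \<subseteq> carrier G" using grp ih by (auto simp: group.is_monoid monoid.m_closed)
  show "(\<lambda>g. g \<otimes>\<^bsub>G\<^esub> h) ` carrier G \<subseteq> carrier G" using grp h by (auto simp: group.is_monoid monoid.m_closed)
qed

lemma msumS_cong: "(\<And>x. x \<in> S \<Longrightarrow> f x = g x) \<Longrightarrow> msumS D S f = msumS D S g"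
  unfolding msumS_def by (intro eq_matI) auto

lemma msumS_reindex: "bij_betw k S S' \<Longrightarrow> msumS D S (\<lambda>x. f (k x)) = msumS D S' f"
proof -
  assume b: "bij_betw k S S'"
  show ?thesis unfolding msumS_def
  proof (rule eq_matI)
    fix i j assume "i < dim_row (mat D D (\<lambda>(i, j). \<Sum>x\<in>S'. f x $$ (i, j)))" "j < dim_col (mat D D (\<lambda>(i, j). \<Sum>x\<in>S'. f x $$ (i, j)))"
    then have "i < D" "j < D" by auto
    then show "mat D D (\<lambda>(i, j). \<Sum>x\<in>S. f (k x) $$ (i, j)) $$ (i, j) = mat D D (\<lambda>(i, j). \<Sum>x\<in>S'. f x $$ (i, j)) $$ (i, j)"
      using sum.reindex_bij_betw[OF b, of "\<lambda>x. f x $$ (i,j)"] by simp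
  qed auto
qed

lemma msum_tuple_act:
  assumes grp: "group G" and act: "her_action G D actH" and ia: "index_action G M actM" and g: "g \<in> carrier G"
    and hP: "\<forall>m<M. herm D (\<Phi> m)"
  shows "msum M D (tuple_act G M D actM actH g \<Phi>) = actH (inv\<^bsub>G\<^esub> g) (msum M D \<Phi>)"
proof -
  have ig: "inv\<^bsub>G\<^esub> g \<in> carrier G" using group.inv_closed[OF grp g] .
  have b: "bij_betw (actM g) {..<M} {..<M}" by (rule idx_bij[OF grp ia g])
  have lt: "\<forall>m<M. actM g m < M" using ia g unfolding index_action_def by blast
  have "msum M D (tuple_act G M D actM actH g \<Phi>) = msumS D {..<M} (\<lambda>m. actH (inv\<^bsub>G\<^esub> g) (\<Phi> (actM g m)))"
    unfolding msum_is_msumS tuple_act_def by (rule msumS_cong) simp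
  also have "\<dots> = actH (inv\<^bsub>G\<^esub> g) (msumS D {..<M} (\<lambda>m. \<Phi> (actM g m)))"
    by (rule act_msumS[OF act ig, symmetric]) (use hP lt in auto)
  also have "msumS D {..<M} (\<lambda>m. \<Phi> (actM g m)) = msum M D \<Phi>"
    unfolding msum_is_msumS by (rule msumS_reindex[OF b])
  finally show ?thesis .
qed

lemma inner_tuple_act:
  assumes grp: "group G" and act: "her_action G D actH" and ia: "index_action G M actM" and g: "g \<in> carrier G"
    and hP: "\<forall>m<M. herm D (\<Phi> m)" and hB: "\<forall>m<M. herm D (B m)"
    and BB: "\<forall>m<M. actH g (B m) = B' (actM g m)"
  shows "(\<Sum>m<M. hs_inner (tuple_act G M D actM actH g \<Phi> m) (B m)) = (\<Sum>m<M. hs_inner (\<Phi> m) (B' m))"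
proof -
  have b: "bij_betw (actM g) {..<M} {..<M}" by (rule idx_bij[OF grp ia g])
  have lt: "\<forall>m<M. actM g m < M" using ia g unfolding index_action_def by blast
  have "(\<Sum>m<M. hs_inner (tuple_act G M D actM actH g \<Phi> m) (B m)) = (\<Sum>m<M. hs_inner (\<Phi> (actM g m)) (B' (actM g m)))"
  proof (rule sum.cong[OF refl])
    fix m assume m: "m \<in> {..<M}"
    have "hs_inner (tuple_act G M D actM actH g \<Phi> m) (B m) = hs_inner (actH (inv\<^bsub>G\<^esub> g) (\<Phi> (actM g m))) (B m)"
      using m unfolding tuple_act_def by simp
    also have "\<dots> = hs_inner (\<Phi> (actM g m)) (actH g (B m))"
      by (rule act_inner_inv[OF grp act g]) (use hP hB lt m in auto)
    finally show "hs_inner (tuple_act G M D actM actH g \<Phi> m) (B m) = hs_inner (\<Phi> (actM g m)) (B' (actM g m))"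
      using BB m by simp
  qed
  also have "\<dots> = (\<Sum>m<M. hs_inner (\<Phi> m) (B' m))"
    by (rule sum.reindex_bij_betw[OF b])
  finally show ?thesis .
qed



theorem proposition2:
  fixes T M J :: nat
    and dV dW :: "nat \<Rightarrow> nat"
    and c :: "nat \<Rightarrow> complex mat" and a :: "nat \<Rightarrow> nat \<Rightarrow> complex mat" and b :: "nat \<Rightarrow> real"
    and \<T> \<C> :: "(nat \<Rightarrow> complex mat) set"
    and G :: "'g monoid"
    and actM actJ :: "'g \<Rightarrow> nat \<Rightarrow> nat"
    and actH :: "'g \<Rightarrow> complex mat \<Rightarrow> complex mat"
    and H :: "nat \<Rightarrow> 'g set"
    and U :: "nat \<Rightarrow> 'g \<Rightarrow> complex mat \<times> bool"
  defines "D \<equiv> Rdim dV dW T"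
    and "\<P> \<equiv> {\<Phi> \<in> \<T>. \<forall>j<J. eta M a b j \<Phi> \<le> 0}"
  assumes T1: "1 \<le> T" and M2: "2 \<le> M"
    and dims: "\<forall>t\<in>{1..T}. 1 \<le> dV t \<and> 1 \<le> dW t"
    (* problem data *)
    and c_herm: "\<forall>m<M. herm D (c m)"
    and a_herm: "\<forall>j<J. \<forall>m<M. herm D (a j m)"
    and T_sub: "\<T> \<subseteq> T_G M T dV dW" and T_ne: "\<T> \<noteq> {}" and T_convex: "tuple_convex \<T>"
    and P_closure: "tuple_closure M D \<P> = {\<Phi> \<in> tuple_closure M D \<T>. \<forall>j<J. eta M a b j \<Phi> \<le> 0}"
    and C_sub: "\<C> \<subseteq> C_G M D" and C_closed: "tuple_closure M D \<C> \<subseteq> \<C>"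
    and C_convex: "tuple_convex \<C>" and C_cone: "tuple_cone \<C>"
    (* S = S_G *)
    and T_closure: "tuple_closure M D \<T> = {\<Phi> \<in> \<C>. msum M D \<Phi> \<in> S_G T dV dW}"
    (* G-symmetry *)
    and grp: "group G" and fin: "finite (carrier G)"
    and actM_ok: "index_action G M actM" and actJ_ok: "index_action G J actJ"
    and actH_ok: "her_action G D actH"
    and sym_T: "\<forall>g\<in>carrier G. \<forall>\<Phi>\<in>\<T>. tuple_act G M D actM actH g \<Phi> \<in> \<T>"
    and sym_C: "\<forall>g\<in>carrier G. \<forall>\<Phi>\<in>\<C>. tuple_act G M D actM actH g \<Phi> \<in> \<C>"
    and sym_S: "\<forall>g\<in>carrier G. \<forall>\<phi>\<in>S_G T dV dW. actH g \<phi> \<in> S_G T dV dW"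
    and sym_a: "\<forall>g\<in>carrier G. \<forall>j<J. \<forall>m<M. actH g (a j m) = a (actJ g j) (actM g m)"
    and sym_b: "\<forall>g\<in>carrier G. \<forall>j<J. b j = b (actJ g j)"
    and sym_c: "\<forall>g\<in>carrier G. \<forall>m<M. actH g (c m) = c (actM g m)"
    (* unital action *)
    and act_id: "\<forall>g\<in>carrier G. actH g (1\<^sub>m D) = 1\<^sub>m D"
    (* irreducible projective representations *)
    and H_sub: "\<forall>t\<in>{1..T}. subgroup (H t) G"
    and U_rep: "\<forall>t\<in>{1..T}. proj_rep G (H t) (dV t) (U t)"
    and U_irr: "\<forall>t\<in>{1..T}. irreducible_rep (H t) (dV t) (U t)"
    and U_cov: "\<forall>t\<in>{1..T}. \<forall>h\<in>H t. \<forall>X. herm D X \<longrightarrow>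
        ptr_left (Qdim T dV dW t * dW t) (dV t * Rdim dV dW (t-1)) (actH h X) =
        Ad_tensor_id (U t h) (dV t) (Rdim dV dW (t-1))
          (ptr_left (Qdim T dV dW t * dW t) (dV t * Rdim dV dW (t-1)) X)"
  shows "Sup ((\<lambda>\<Phi>. ereal (Pobj M c \<Phi>)) ` \<P>) =
         Sup ((\<lambda>\<Phi>. ereal (Pobj M c \<Phi>)) `
           {\<Phi> \<in> \<C>. msum M D \<Phi> = (1 / of_nat (\<Prod>t\<in>{1..T}. dV t)) \<cdot>\<^sub>m 1\<^sub>m D \<and>
                     (\<forall>j<J. eta M a b j \<Phi> \<le> 0)})"
proof -
  have inT: "\<Phi> \<in> tuple_space M D \<and> (\<forall>m<M. psd D (\<Phi> m)) \<and> msum M D \<Phi> \<in> S_G T dV dW" if "\<Phi> \<in> \<T>" for \<Phi>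
    using T_sub that unfolding T_G_def C_G_def D_def by blast
  have carTS: "\<Phi> m \<in> carrier_mat D D" if "\<Phi> \<in> tuple_space M D" for \<Phi> m
  proof (cases "m < M")
    case True then show ?thesis using that unfolding tuple_space_def by blast
  next
    case False then have "\<Phi> m = 0\<^sub>m D D" using that unfolding tuple_space_def by auto
    then show ?thesis by simp
  qed
  have carT: "\<Phi> m \<in> carrier_mat D D" if "\<Phi> \<in> \<T>" for \<Phi> m
    using carTS inT that by blast
  have hermT: "herm D (\<Phi> m)" if "\<Phi> \<in> \<T>" "m < M" for \<Phi> m
    using inT that psd_herm by blast
  have T_cl: "\<T> \<subseteq> tuple_closure M D \<T>"
  proof
    fix \<Phi> assume \<Phi>: "\<Phi> \<in> \<T>"
    show "\<Phi> \<in> tuple_closure M D \<T>" unfolding tuple_closure_def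
      using \<Phi> inT[OF \<Phi>] by (auto intro!: exI[of _ "\<lambda>k. \<Phi>"])
  qed
  have TC: "\<T> \<subseteq> \<C>" using T_cl T_closure by blast
  have cc: "c m \<in> carrier_mat D D" if "m < M" for m using c_herm that herm_carrier by blast
  have PT: "\<P> \<subseteq> \<T>" unfolding \<P>_def by blast
  have ge: "Sup ((\<lambda>\<Phi>. ereal (Pobj M c \<Phi>)) `
           {\<Phi> \<in> \<C>. msum M D \<Phi> = (1 / of_nat (\<Prod>t\<in>{1..T}. dV t)) \<cdot>\<^sub>m 1\<^sub>m D \<and>
                     (\<forall>j<J. eta M a b j \<Phi> \<le> 0)}) \<le> Sup ((\<lambda>\<Phi>. ereal (Pobj M c \<Phi>)) ` \<P>)"
  proof (rule SUP_least)
    fix \<Phi> assume \<Phi>: "\<Phi> \<in> {\<Phi> \<in> \<C>. msum M D \<Phi> = (1 / of_nat (\<Prod>t\<in>{1..T}. dV t)) \<cdot>\<^sub>m 1\<^sub>m D \<and>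
                     (\<forall>j<J. eta M a b j \<Phi> \<le> 0)}"
    then have \<Phi>C: "\<Phi> \<in> \<C>" and ms: "msum M D \<Phi> = (1 / of_nat (\<Prod>t\<in>{1..T}. dV t)) \<cdot>\<^sub>m 1\<^sub>m D"
      and et: "\<forall>j<J. eta M a b j \<Phi> \<le> 0" by auto
    have "msum M D \<Phi> \<in> S_G T dV dW" using id_in_SG[OF T1 dims] ms unfolding D_def by simp
    then have "\<Phi> \<in> tuple_closure M D \<T>" using T_closure \<Phi>C by blast
    then have "\<Phi> \<in> tuple_closure M D \<P>" using P_closure et by blast
    then obtain \<Phi>s where \<Phi>ts: "\<Phi> \<in> tuple_space M D" and seq: "\<forall>k. \<Phi>s k \<in> \<P>"
      and conv: "\<forall>m<M. \<forall>i<D. \<forall>j<D. (\<lambda>k. \<Phi>s k m $$ (i,j)) \<longlonglongrightarrow> \<Phi> m $$ (i,j)"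
      unfolding tuple_closure_def by blast
    have PobjF: "Pobj M c \<Psi> = (\<Sum>m<M. Re (\<Sum>i<D. \<Sum>k<D. \<Psi> m $$ (i,k) * c m $$ (k,i)))"
      if "\<Psi> \<in> tuple_space M D" for \<Psi>
      unfolding Pobj_def by (intro sum.cong refl hs_inner_formula) (use carTS[OF that] cc in auto)
    have seqts: "\<Phi>s k \<in> tuple_space M D" for k using seq PT inT by blast
    have "(\<lambda>k. Pobj M c (\<Phi>s k)) = (\<lambda>k. (\<Sum>m<M. Re (\<Sum>i<D. \<Sum>k'<D. \<Phi>s k m $$ (i,k') * c m $$ (k',i))))"
      using PobjF[OF seqts] by simp
    moreover have "(\<lambda>k. (\<Sum>m<M. Re (\<Sum>i<D. \<Sum>k'<D. \<Phi>s k m $$ (i,k') * c m $$ (k',i)))) \<longlonglongrightarrow>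
        (\<Sum>m<M. Re (\<Sum>i<D. \<Sum>k'<D. \<Phi> m $$ (i,k') * c m $$ (k',i)))"
      by (intro tendsto_sum tendsto_Re tendsto_mult tendsto_const) (use conv in auto)
    ultimately have lim: "(\<lambda>k. Pobj M c (\<Phi>s k)) \<longlonglongrightarrow> Pobj M c \<Phi>" using PobjF[OF \<Phi>ts] by simp
    have ub: "\<forall>k. ereal (Pobj M c (\<Phi>s k)) \<le> Sup ((\<lambda>\<Phi>. ereal (Pobj M c \<Phi>)) ` \<P>)"
      using seq by (auto intro: SUP_upper)
    show "ereal (Pobj M c \<Phi>) \<le> Sup ((\<lambda>\<Phi>. ereal (Pobj M c \<Phi>)) ` \<P>)"
      by (rule LIMSEQ_le_const2[OF tendsto_ereal[OF lim]]) (use ub in auto)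
  qed
  have le: "Sup ((\<lambda>\<Phi>. ereal (Pobj M c \<Phi>)) ` \<P>) \<le> Sup ((\<lambda>\<Phi>. ereal (Pobj M c \<Phi>)) `
           {\<Phi> \<in> \<C>. msum M D \<Phi> = (1 / of_nat (\<Prod>t\<in>{1..T}. dV t)) \<cdot>\<^sub>m 1\<^sub>m D \<and>
                     (\<forall>j<J. eta M a b j \<Phi> \<le> 0)})"
  proof (rule SUP_mono)
    fix \<Phi> assume \<Phi>P: "\<Phi> \<in> \<P>"
    then have \<Phi>T: "\<Phi> \<in> \<T>" and et\<Phi>: "\<forall>j<J. eta M a b j \<Phi> \<le> 0" unfolding \<P>_def by auto
    define \<Phi>g where "\<Phi>g g = tuple_act G M D actM actH g \<Phi>" for g
    define \<Phi>b where "\<Phi>b = tavg D (carrier G) \<Phi>g"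
    have h\<Phi>: "\<forall>m<M. herm D (\<Phi> m)" using hermT[OF \<Phi>T] by blast
    have \<Phi>gT: "\<Phi>g g \<in> \<T>" if "g \<in> carrier G" for g using sym_T \<Phi>T that unfolding \<Phi>g_def by blast
    have \<Phi>gP: "\<forall>g\<in>carrier G. \<Phi>g g \<in> \<P>"
    proof
      fix g assume g: "g \<in> carrier G"
      have "eta M a b j (\<Phi>g g) \<le> 0" if j: "j < J" for j
      proof -
        have "(\<Sum>m<M. hs_inner (\<Phi>g g m) (a j m)) = (\<Sum>m<M. hs_inner (\<Phi> m) (a (actJ g j) m))"
          unfolding \<Phi>g_def
          by (rule inner_tuple_act[OF grp actH_ok actM_ok g h\<Phi>]) (use a_herm sym_a g j in auto)
        moreover have "b j = b (actJ g j)" using sym_b g j by blast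
        moreover have "actJ g j < J" using actJ_ok g j unfolding index_action_def by blast
        ultimately show ?thesis using et\<Phi> unfolding eta_def by auto
      qed
      then show "\<Phi>g g \<in> \<P>" unfolding \<P>_def using \<Phi>gT[OF g] by blast
    qed
    have Pconv: "tuple_convex \<P>"
      unfolding tuple_convex_def
    proof (intro ballI allI impI)
      fix \<Phi>1 \<Psi> and u :: real assume \<Phi>1: "\<Phi>1 \<in> \<P>" and \<Psi>: "\<Psi> \<in> \<P>" and u: "0 \<le> u \<and> u \<le> 1"
      define X where "X = (\<lambda>m. complex_of_real u \<cdot>\<^sub>m \<Phi>1 m + complex_of_real (1 - u) \<cdot>\<^sub>m \<Psi> m)"
      have XT: "X \<in> \<T>" using T_convex \<Phi>1 \<Psi> u PT unfolding tuple_convex_def X_def by blast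
      have "eta M a b j X \<le> 0" if j: "j < J" for j
      proof -
        have "(\<Sum>m<M. hs_inner (X m) (a j m)) = u * (\<Sum>m<M. hs_inner (\<Phi>1 m) (a j m)) + (1 - u) * (\<Sum>m<M. hs_inner (\<Psi> m) (a j m))"
          unfolding X_def sum_distrib_left sum.distrib[symmetric]
          by (intro sum.cong refl hs_inner_comb) (use carT \<Phi>1 \<Psi> PT a_herm j herm_carrier in auto)
        moreover have "eta M a b j \<Phi>1 \<le> 0" "eta M a b j \<Psi> \<le> 0" using \<Phi>1 \<Psi> j unfolding \<P>_def by auto
        ultimately have "eta M a b j X = u * eta M a b j \<Phi>1 + (1 - u) * eta M a b j \<Psi>"
          unfolding eta_def by (simp add: algebra_simps)
        moreover have "u * eta M a b j \<Phi>1 \<le> 0" "(1 - u) * eta M a b j \<Psi> \<le> 0"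
          using u \<open>eta M a b j \<Phi>1 \<le> 0\<close> \<open>eta M a b j \<Psi> \<le> 0\<close> by (simp_all add: mult_nonneg_nonpos)
        ultimately show ?thesis by simp
      qed
      then show "(\<lambda>m. complex_of_real u \<cdot>\<^sub>m \<Phi>1 m + complex_of_real (1 - u) \<cdot>\<^sub>m \<Psi> m) \<in> \<P>"
        unfolding \<P>_def X_def[symmetric] using XT by blast
    qed
    have finG: "finite (carrier G)" by (rule fin)
    have neG: "carrier G \<noteq> {}" using group.is_monoid[OF grp] monoid.one_closed by blast
    have carg: "\<forall>g\<in>carrier G. \<forall>m. \<Phi>g g m \<in> carrier_mat D D" using carT \<Phi>gT by blast
    have \<Phi>bP: "\<Phi>b \<in> \<P>" unfolding \<Phi>b_def by (rule convex_avg[OF Pconv finG neG \<Phi>gP carg])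
    have \<Phi>bT: "\<Phi>b \<in> \<T>" using \<Phi>bP PT by blast
    define N where "N = real (card (carrier G))"
    have N0: "N > 0" unfolding N_def using finG neG by (simp add: card_gt_0_iff)
    have Pb: "Pobj M c \<Phi>b = Pobj M c \<Phi>"
    proof -
      have "Pobj M c \<Phi>b = (\<Sum>m<M. (\<Sum>g\<in>carrier G. hs_inner (\<Phi>g g m) (c m)) / N)"
        unfolding Pobj_def \<Phi>b_def N_def
        by (intro sum.cong refl hs_inner_tavg[OF finG neG]) (use carg cc in auto)
      also have "\<dots> = (\<Sum>g\<in>carrier G. \<Sum>m<M. hs_inner (\<Phi>g g m) (c m)) / N"
        by (simp only: sum_divide_distrib[symmetric] sum.swap[of _ "{..<M}"])
      also have "\<dots> = (\<Sum>g\<in>carrier G. Pobj M c \<Phi>) / N"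
      proof -
        have "(\<Sum>m<M. hs_inner (\<Phi>g g m) (c m)) = Pobj M c \<Phi>" if g: "g \<in> carrier G" for g
          unfolding \<Phi>g_def Pobj_def
          by (rule inner_tuple_act[OF grp actH_ok actM_ok g h\<Phi>]) (use c_herm sym_c g in auto)
        then show ?thesis by simp
      qed
      also have "\<dots> = Pobj M c \<Phi>" using N0 unfolding N_def by simp
      finally show ?thesis .
    qed
    define \<sigma>0 where "\<sigma>0 = msum M D \<Phi>"
    have h\<sigma>0: "herm D \<sigma>0" unfolding \<sigma>0_def msum_is_msumS by (rule msumS_herm) (use h\<Phi> in auto)
    have hinv: "herm D (actH (inv\<^bsub>G\<^esub> g) \<sigma>0)" if "g \<in> carrier G" for g
      using ha_herm[OF actH_ok group.inv_closed[OF grp that] h\<sigma>0] .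
    define S where "S = msumS D (carrier G) (\<lambda>g. actH (inv\<^bsub>G\<^esub> g) \<sigma>0)"
    have hS: "herm D S" unfolding S_def by (rule msumS_herm) (use hinv in auto)
    have \<sigma>e: "msum M D \<Phi>b = complex_of_real (1 / N) \<cdot>\<^sub>m S"
    proof (rule eq_matI)
      fix i j assume "i < dim_row (complex_of_real (1 / N) \<cdot>\<^sub>m S)" "j < dim_col (complex_of_real (1 / N) \<cdot>\<^sub>m S)"
      then have i: "i < D" and j: "j < D" unfolding S_def by (auto simp: msumS_def)
      have "msum M D \<Phi>b $$ (i,j) = (\<Sum>m<M. (\<Sum>g\<in>carrier G. \<Phi>g g m $$ (i,j)) / of_nat (card (carrier G)))"
        unfolding msum_def \<Phi>b_def tavg_def using i j by simp
      also have "\<dots> = (\<Sum>g\<in>carrier G. \<Sum>m<M. \<Phi>g g m $$ (i,j)) / of_nat (card (carrier G))"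
        by (simp only: sum_divide_distrib[symmetric] sum.swap[of _ "{..<M}"])
      also have "(\<Sum>g\<in>carrier G. \<Sum>m<M. \<Phi>g g m $$ (i,j)) = (\<Sum>g\<in>carrier G. actH (inv\<^bsub>G\<^esub> g) \<sigma>0 $$ (i,j))"
      proof (rule sum.cong[OF refl])
        fix g assume g: "g \<in> carrier G"
        have "actH (inv\<^bsub>G\<^esub> g) \<sigma>0 = msum M D (\<Phi>g g)"
          unfolding \<sigma>0_def \<Phi>g_def by (rule msum_tuple_act[OF grp actH_ok actM_ok g h\<Phi>, symmetric])
        then show "(\<Sum>m<M. \<Phi>g g m $$ (i,j)) = actH (inv\<^bsub>G\<^esub> g) \<sigma>0 $$ (i,j)"
          unfolding msum_def using i j by simp
      qed
      also have "(\<Sum>g\<in>carrier G. actH (inv\<^bsub>G\<^esub> g) \<sigma>0 $$ (i,j)) / of_nat (card (carrier G)) = (complex_of_real (1 / N) \<cdot>\<^sub>m S) $$ (i,j)"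
        unfolding S_def msumS_def N_def using i j by simp
      finally show "msum M D \<Phi>b $$ (i,j) = (complex_of_real (1 / N) \<cdot>\<^sub>m S) $$ (i,j)" .
    qed (auto simp: msum_def S_def msumS_def)
    have Sinv: "actH h S = S" if h: "h \<in> carrier G" for h
    proof -
      have ih: "inv\<^bsub>G\<^esub> h \<in> carrier G" using group.inv_closed[OF grp h] .
      have "actH h S = msumS D (carrier G) (\<lambda>g. actH h (actH (inv\<^bsub>G\<^esub> g) \<sigma>0))"
        unfolding S_def by (rule act_msumS[OF actH_ok h finG]) (use hinv in auto)
      also have "\<dots> = msumS D (carrier G) (\<lambda>g. (\<lambda>g. actH (inv\<^bsub>G\<^esub> g) \<sigma>0) (g \<otimes>\<^bsub>G\<^esub> inv\<^bsub>G\<^esub> h))"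
      proof (rule msumS_cong)
        fix g assume g: "g \<in> carrier G"
        have ig: "inv\<^bsub>G\<^esub> g \<in> carrier G" using group.inv_closed[OF grp g] .
        have "actH h (actH (inv\<^bsub>G\<^esub> g) \<sigma>0) = actH (h \<otimes>\<^bsub>G\<^esub> inv\<^bsub>G\<^esub> g) \<sigma>0"
          using ha_mult[OF actH_ok h ig h\<sigma>0] by simp
        moreover have "inv\<^bsub>G\<^esub> (g \<otimes>\<^bsub>G\<^esub> inv\<^bsub>G\<^esub> h) = h \<otimes>\<^bsub>G\<^esub> inv\<^bsub>G\<^esub> g"
          using group.inv_mult_group[OF grp g ih] group.inv_inv[OF grp h] by simp
        ultimately show "actH h (actH (inv\<^bsub>G\<^esub> g) \<sigma>0) = (\<lambda>g. actH (inv\<^bsub>G\<^esub> g) \<sigma>0) (g \<otimes>\<^bsub>G\<^esub> inv\<^bsub>G\<^esub> h)" by simp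
      qed
      also have "\<dots> = S" unfolding S_def by (rule msumS_reindex[OF right_mult_bij[OF grp h]])
      finally show ?thesis .
    qed
    have hsig: "herm D (msum M D \<Phi>b)" unfolding msum_is_msumS by (rule msumS_herm) (use hermT[OF \<Phi>bT] in auto)
    have siginv: "actH h (msum M D \<Phi>b) = msum M D \<Phi>b" if h: "h \<in> carrier G" for h
      unfolding \<sigma>e using ha_smult[OF actH_ok h hS, of "1 / N"] Sinv[OF h] by (simp only:)
    have msb0: "msum M D \<Phi>b = (1 / of_nat (\<Prod>t\<in>{1..T}. dV t)) \<cdot>\<^sub>m 1\<^sub>m (Rdim dV dW T)"
    proof (rule SG_inv_id[OF T1 dims])
      show "msum M D \<Phi>b \<in> S_G T dV dW" using inT[OF \<Phi>bT] by blast
      show "\<forall>t\<in>{1..T}. \<forall>h\<in>H t. unitary_mat (dV t) (fst (U t h))" using U_rep unfolding proj_rep_def by blast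
      show "\<forall>t\<in>{1..T}. irreducible_rep (H t) (dV t) (U t)" by (rule U_irr)
      show "\<forall>t\<in>{1..T}. \<forall>h\<in>H t.
        Ad_tensor_id (U t h) (dV t) (Rdim dV dW (t-1)) (ptr_left (Qdim T dV dW t * dW t) (dV t * Rdim dV dW (t-1)) (msum M D \<Phi>b))
        = ptr_left (Qdim T dV dW t * dW t) (dV t * Rdim dV dW (t-1)) (msum M D \<Phi>b)"
      proof (intro ballI)
        fix t h assume t: "t \<in> {1..T}" and h: "h \<in> H t"
        have hG: "h \<in> carrier G" using subgroup.subset[OF bspec[OF H_sub t]] h by blast
        have "ptr_left (Qdim T dV dW t * dW t) (dV t * Rdim dV dW (t-1)) (actH h (msum M D \<Phi>b)) =
          Ad_tensor_id (U t h) (dV t) (Rdim dV dW (t-1)) (ptr_left (Qdim T dV dW t * dW t) (dV t * Rdim dV dW (t-1)) (msum M D \<Phi>b))"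
          using U_cov t h hsig by blast
        then show "Ad_tensor_id (U t h) (dV t) (Rdim dV dW (t-1)) (ptr_left (Qdim T dV dW t * dW t) (dV t * Rdim dV dW (t-1)) (msum M D \<Phi>b))
          = ptr_left (Qdim T dV dW t * dW t) (dV t * Rdim dV dW (t-1)) (msum M D \<Phi>b)"
          using siginv[OF hG] by simp
      qed
    qed
    have msb: "msum M D \<Phi>b = (1 / of_nat (\<Prod>t\<in>{1..T}. dV t)) \<cdot>\<^sub>m 1\<^sub>m D"
      using msb0 unfolding D_def .
    have \<Phi>bC: "\<Phi>b \<in> \<C>" using \<Phi>bT TC by blast
    have et: "\<forall>j<J. eta M a b j \<Phi>b \<le> 0" using \<Phi>bP unfolding \<P>_def by blast
    show "\<exists>\<Psi>\<in>{\<Phi> \<in> \<C>. msum M D \<Phi> = (1 / of_nat (\<Prod>t\<in>{1..T}. dV t)) \<cdot>\<^sub>m 1\<^sub>m D \<and>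
                     (\<forall>j<J. eta M a b j \<Phi> \<le> 0)}. ereal (Pobj M c \<Phi>) \<le> ereal (Pobj M c \<Psi>)"
      using \<Phi>bC msb et Pb by (intro bexI[of _ \<Phi>b]) auto
  qed
  show ?thesis using le ge by (rule antisym)
qed

end
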